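(* Let $\mathbb K\in\{\mathbb R,\mathbb C\}$ and fix a family of Taylor sheaves. For $i=1,2$, let $V_i$ be a finite-dimensional $\mathbb K$-linear space, $U_i\subset V_i$ an open subset, and $M_i\subset U_i$ a closed subset endowed with the structure induced from $(V_i,\mathcal F^{V_i})$, and let $\mathrm T M_i$ be endowed with the structure induced from $\mathrm T V_i=V_i\times V_i$. Then for every smooth map $\psi:M_1\to M_2$, the differential $d\psi:\mathrm T M_1\to\mathrm T M_2$ is smooth.
   Context: A space with a sheaf of $\mathbb K$-valued functions is a topological space $M$ with, for each open $U$, a $\mathbb K$-algebra $\mathcal F(U)$ of functions $U\to\mathbb K$ (containing constants), closed under restriction and such that locally-$\mathcal F$ functions are in $\mathcal F$. $\mathcal F_p$ denotes the stalk of germs at $p$ and $\mathfrak m_p$ the ideal of germs vanishing at $p$; the sheaf is local if germs outside $\mathfrak m_p$ are invertible. A continuous map is smooth if composition with it sends local functions of the target sheaf into the source sheaf. The induced structure on a subset is the subspace topology with the sheaf of functions locally equal to restrictions of functions of the ambient sheaf. Taylor sheaves: every finite-dimensional $\mathbb K$-linear space $V$ carries a topology and a local sheaf $\mathcal F^V$ with: (1) the topology is the weakest making all of $\mathcal F^V(V)$ continuous; (2) $V^*\subset\mathcal F^V(V)$; (3) for open $U\subset V$, $\psi:U\to W$ ($W$ finite-dimensional) is smooth iff $\varphi\circ\psi\in\mathcal F^V(U)$ for all $\varphi\in W^*$; (4) for each $p\in V$, $V^*\to\mathfrak m_p/\mathfrak m_p^2$, $\varphi\mapsto(\varphi-\varphi(p))_p$,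 is an isomorphism (so each $f\in\mathcal F^V(U)$, $p\in U$, determines a unique $df_p\in V^*$ with $f_p-f(p)-(df_p-df_p(p))_p\in\mathfrak m_p^2$); (5) for $f\in\mathcal F^V(U)$, the function $(p,v)\mapsto df_p(v)$ lies in $\mathcal F^{V\oplus V}(U\times V)$. The space $V\oplus V=V\times V$ carries its Taylor sheaf structure. For a space $M$ with sheaf $\mathcal F$ and $p\in M$, the tangent space $\mathrm T_pM$ is the $\mathbb K$-linear space of derivations at $p$: $\mathbb K$-linear $t:\mathcal F_p\to\mathbb K$ with $t(g_1g_2)=g_1(p)t(g_2)+g_2(p)t(g_1)$; $\mathrm T M=\bigsqcup_{p\in M}\mathrm T_pM$. For a smooth map $\psi:M\to N$, the differential $d\psi:\mathrm TM\to\mathrm TN$ sends $t\in\mathrm T_pM$ to $d\psi_p t\in\mathrm T_{\psi(p)}N$, $(d\psi_p t)(f)=t(f\circ\psi)$. For $M\subset V$ with induced structure, $\mathrm T_pM$ is identified (via the differential of the inclusion) with a subspace of $\mathrm T_pV$, and $\mathrm T_pV$ is identified with $V$ by $t\mapsto$ the unique $v\in V$ with $\varphi(v)=t(\varphi)$ for all $\varphi\in V^*$; this gives an injection $\mathrm T M\hookrightarrow V\times V$, $t\in \mathrm T_pM\mapsto(p,v)$, and $\mathrm TM$ is given the structure induced from $V\times V=\mathrm TV$. *)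

theory Defs
  imports "HOL-Analysis.Analysis"
begin

text \<open>The scalar field K (either the reals or the complex numbers) is
modelled as a subset of the complex numbers.  A finite-dimensional K-linear space of
dimension n is modelled as K^n, realised as the set of coordinate functions
nat \<Rightarrow> complex with K-valued coordinates below n and zero coordinates from n on.
A function on an open set U is a total function whose values outside U are irrelevant;
a sheaf is a map sending each open set U to a set of such functions.\<close>

type_synonym pt = "nat \<Rightarrow> complex"
type_synonym sheaf = "pt set \<Rightarrow> (pt \<Rightarrow> complex) set"

definition kvec :: "complex set \<Rightarrow> nat \<Rightarrow> pt set" where
  "kvec K n = {x. (\<forall>i<n. x i \<in> K) \<and> (\<forall>i\<ge>n. x i = 0)}"

definition kdual :: "complex set \<Rightarrow> nat \<Rightarrow> (pt \<Rightarrow> complex) set" where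
  "kdual K n = {\<phi>. (\<forall>x\<in>kvec K n. \<phi> x \<in> K)
      \<and> (\<forall>x\<in>kvec K n. \<forall>y\<in>kvec K n. \<phi> (\<lambda>i. x i + y i) = \<phi> x + \<phi> y)
      \<and> (\<forall>c\<in>K. \<forall>x\<in>kvec K n. \<phi> (\<lambda>i. c * x i) = c * \<phi> x)}"

text \<open>The direct sum K^n \<oplus> K^n realised as K^(2n).\<close>
definition join :: "nat \<Rightarrow> pt \<Rightarrow> pt \<Rightarrow> pt" where
  "join n x y = (\<lambda>i. if i < n then x i else y (i - n))"

definition fstp :: "nat \<Rightarrow> pt \<Rightarrow> pt" where
  "fstp n z = (\<lambda>i. if i < n then z i else 0)"

definition sndp :: "nat \<Rightarrow> pt \<Rightarrow> pt" where
  "sndp n z = (\<lambda>i. if i < n then z (i + n) else 0)"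

definition sheaf_space :: "complex set \<Rightarrow> pt topology \<Rightarrow> sheaf \<Rightarrow> bool" where
  "sheaf_space K X F \<longleftrightarrow>
     (\<forall>U. openin X U \<longrightarrow>
        (\<forall>f\<in>F U. \<forall>x\<in>U. f x \<in> K)
      \<and> (\<forall>c\<in>K. (\<lambda>_. c) \<in> F U)
      \<and> (\<forall>f\<in>F U. \<forall>g\<in>F U. (\<lambda>x. f x + g x) \<in> F U \<and> (\<lambda>x. f x * g x) \<in> F U)
      \<and> (\<forall>f\<in>F U. \<forall>g. (\<forall>x\<in>U. g x = f x) \<longrightarrow> g \<in> F U)
      \<and> (\<forall>W. openin X W \<and> W \<subseteq> U \<longrightarrow> F U \<subseteq> F W)
      \<and> (\<forall>g. (\<forall>x\<in>U. \<exists>W. openin X W \<and> x \<in> W \<and> W \<subseteq> U \<and> g \<in> F W) \<longrightarrow> g \<in> F U))"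

definition local_sheaf :: "pt topology \<Rightarrow> sheaf \<Rightarrow> bool" where
  "local_sheaf X F \<longleftrightarrow>
     (\<forall>U f p. openin X U \<and> p \<in> U \<and> f \<in> F U \<and> f p \<noteq> 0 \<longrightarrow>
        (\<exists>W g. openin X W \<and> p \<in> W \<and> W \<subseteq> U \<and> g \<in> F W \<and> (\<forall>x\<in>W. f x * g x = 1)))"

text \<open>The germ at p of g lies in the square of the maximal ideal m_p.\<close>
definition in_msq :: "pt topology \<Rightarrow> sheaf \<Rightarrow> pt \<Rightarrow> (pt \<Rightarrow> complex) \<Rightarrow> bool" where
  "in_msq X F p g \<longleftrightarrow>
     (\<exists>W (m::nat) a b. openin X W \<and> p \<in> W \<and>
        (\<forall>j<m. a j \<in> F W \<and> b j \<in> F W \<and> a j p = 0 \<and> b j p = 0) \<and>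
        (\<forall>x\<in>W. g x = (\<Sum>j<m. a j x * b j x)))"

text \<open>Structure induced on a subset M.  (The topology is subtopology X M.)\<close>
definition induced_sheaf :: "pt topology \<Rightarrow> sheaf \<Rightarrow> pt set \<Rightarrow> sheaf" where
  "induced_sheaf X F M U =
     {f. \<forall>p\<in>U. \<exists>W. openin X W \<and> p \<in> W \<and> (\<exists>g\<in>F W. \<forall>x\<in>U \<inter> W. f x = g x)}"

definition smooth_map :: "pt topology \<Rightarrow> sheaf \<Rightarrow> pt topology \<Rightarrow> sheaf \<Rightarrow> (pt \<Rightarrow> pt) \<Rightarrow> bool" where
  "smooth_map X F Y G \<psi> \<longleftrightarrow> continuous_map X Y \<psi> \<and>
     (\<forall>U. openin Y U \<longrightarrow> (\<forall>f\<in>G U. f \<circ> \<psi> \<in> F {x \<in> topspace X. \<psi> x \<in> U}))"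

text \<open>A derivation is represented by a function on
pairs (U,f) with U open, p in U, f in F U, which depends only on the germ of f at p;
it is normalised to 0 on all other pairs.\<close>
definition germ_rep :: "pt topology \<Rightarrow> sheaf \<Rightarrow> pt \<Rightarrow> pt set \<times> (pt \<Rightarrow> complex) \<Rightarrow> bool" where
  "germ_rep X F p Uf \<longleftrightarrow> openin X (fst Uf) \<and> p \<in> fst Uf \<and> snd Uf \<in> F (fst Uf)"

definition derivation :: "complex set \<Rightarrow> pt topology \<Rightarrow> sheaf \<Rightarrow> pt
      \<Rightarrow> (pt set \<times> (pt \<Rightarrow> complex) \<Rightarrow> complex) \<Rightarrow> bool" where
  "derivation K X F p t \<longleftrightarrow>
     (\<forall>Uf. \<not> germ_rep X F p Uf \<longrightarrow> t Uf = 0)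
   \<and> (\<forall>U f. germ_rep X F p (U, f) \<longrightarrow> t (U, f) \<in> K)
   \<and> (\<forall>U f U' g. germ_rep X F p (U, f) \<and> germ_rep X F p (U', g) \<and>
        (\<exists>W. openin X W \<and> p \<in> W \<and> W \<subseteq> U \<inter> U' \<and> (\<forall>x\<in>W. f x = g x))
        \<longrightarrow> t (U, f) = t (U', g))
   \<and> (\<forall>U f U' g. germ_rep X F p (U, f) \<and> germ_rep X F p (U', g) \<longrightarrow>
        t (U \<inter> U', \<lambda>x. f x + g x) = t (U, f) + t (U', g)
      \<and> t (U \<inter> U', \<lambda>x. f x * g x) = f p * t (U', g) + g p * t (U, f))
   \<and> (\<forall>U f c. germ_rep X F p (U, f) \<and> c \<in> K \<longrightarrow> t (U, \<lambda>x. c * f x) = c * t (U, f))"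

text \<open>A family of Taylor sheaves over K: for each n a topology T n and a sheaf S n on K^n.
The sheaf on K^n \<oplus> K^n is that of K^(2n) via join.\<close>
definition taylor_family :: "complex set \<Rightarrow> (nat \<Rightarrow> pt topology) \<Rightarrow> (nat \<Rightarrow> sheaf) \<Rightarrow> bool" where
  "taylor_family K T S \<longleftrightarrow>
   (\<forall>n. topspace (T n) = kvec K n \<and> sheaf_space K (T n) (S n) \<and> local_sheaf (T n) (S n)
    \<comment> \<open>(1) weakest topology making all global functions continuous\<close>
    \<and> (\<forall>f\<in>S n (kvec K n). continuous_map (T n) (top_of_set K) f)
    \<and> (\<forall>X'. topspace X' = kvec K n \<and>
           (\<forall>f\<in>S n (kvec K n). continuous_map X' (top_of_set K) f)
           \<longrightarrow> (\<forall>U. openin (T n) U \<longrightarrow> openin X' U))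
    \<comment> \<open>(2)\<close>
    \<and> kdual K n \<subseteq> S n (kvec K n)
    \<comment> \<open>(3)\<close>
    \<and> (\<forall>U m \<psi>. openin (T n) U \<and> \<psi> ` U \<subseteq> kvec K m \<longrightarrow>
         (smooth_map (subtopology (T n) U) (induced_sheaf (T n) (S n) U) (T m) (S m) \<psi>
          \<longleftrightarrow> (\<forall>\<phi>\<in>kdual K m. \<phi> \<circ> \<psi> \<in> S n U)))
    \<comment> \<open>(4)\<close>
    \<and> (\<forall>p\<in>kvec K n.
         (\<forall>\<phi>\<in>kdual K n. in_msq (T n) (S n) p (\<lambda>x. \<phi> x - \<phi> p) \<longrightarrow> (\<forall>x\<in>kvec K n. \<phi> x = 0))
       \<and> (\<forall>U f. openin (T n) U \<and> p \<in> U \<and> f \<in> S n U \<and> f p = 0 \<longrightarrow>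
            (\<exists>\<phi>\<in>kdual K n. in_msq (T n) (S n) p (\<lambda>x. f x - (\<phi> x - \<phi> p)))))
    \<comment> \<open>(5) (p,v) \<mapsto> df_p(v) lies in the sheaf of K^n \<oplus> K^n on U \<times> K^n\<close>
    \<and> (\<forall>U f. openin (T n) U \<and> f \<in> S n U \<longrightarrow>
         (\<exists>D \<in> S (2 * n) ((\<lambda>(p, v). join n p v) ` (U \<times> kvec K n)).
            \<forall>p\<in>U. \<forall>\<phi>\<in>kdual K n.
              in_msq (T n) (S n) p (\<lambda>x. f x - f p - (\<phi> x - \<phi> p)) \<longrightarrow>
              (\<forall>v\<in>kvec K n. D (join n p v) = \<phi> v))))"

text \<open>Tangent bundle of M \<subseteq> K^n (with induced structure), as a subset of
K^n \<oplus> K^n = K^(2n): the point join n p v corresponds to the derivation t at p with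
\<phi>(v) = t(\<phi> restricted to M) for all \<phi> in the dual.\<close>
definition tangent_set :: "complex set \<Rightarrow> (nat \<Rightarrow> pt topology) \<Rightarrow> (nat \<Rightarrow> sheaf) \<Rightarrow> nat \<Rightarrow> pt set \<Rightarrow> pt set" where
  "tangent_set K T S n M = {join n p v | p v. p \<in> M \<and> v \<in> kvec K n \<and>
      (\<exists>t. derivation K (subtopology (T n) M) (induced_sheaf (T n) (S n) M) p t \<and>
           (\<forall>\<phi>\<in>kdual K n. \<phi> v = t (M, \<phi>)))}"

definition differential :: "complex set \<Rightarrow> (nat \<Rightarrow> pt topology) \<Rightarrow> (nat \<Rightarrow> sheaf)
      \<Rightarrow> nat \<Rightarrow> pt set \<Rightarrow> nat \<Rightarrow> (pt \<Rightarrow> pt) \<Rightarrow> pt \<Rightarrow> pt" where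
  "differential K T S n1 M1 n2 \<psi> z =
     (let p = fstp n1 z; v = sndp n1 z in
      join n2 (\<psi> p) (THE w. w \<in> kvec K n2 \<and>
        (\<exists>t. derivation K (subtopology (T n1) M1) (induced_sheaf (T n1) (S n1) M1) p t \<and>
             (\<forall>\<phi>\<in>kdual K n1. \<phi> v = t (M1, \<phi>)) \<and>
             (\<forall>\<phi>\<in>kdual K n2. \<phi> w = t (M1, \<phi> \<circ> \<psi>)))))"

end

theory Submission
  imports Defs
begin


lemma Kf:
  assumes "K = \<real> \<or> K = (UNIV::complex set)"
  shows "0 \<in> K" "1 \<in> K" "-1 \<in> K"
    "\<And>a b. a \<in> K \<Longrightarrow> b \<in> K \<Longrightarrow> a + b \<in> K"
    "\<And>a b. a \<in> K \<Longrightarrow> b \<in> K \<Longrightarrow> a * b \<in> K"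
    "\<And>a. a \<in> K \<Longrightarrow> - a \<in> K"
  using assms by auto

context
  fixes K :: "complex set" and X :: "pt topology" and F :: sheaf
  assumes sh: "sheaf_space K X F"
begin

lemma sh_parts: assumes "openin X U" shows
    "(\<forall>f\<in>F U. \<forall>x\<in>U. f x \<in> K)"
    "(\<forall>c\<in>K. (\<lambda>_. c) \<in> F U)"
    "(\<forall>f\<in>F U. \<forall>g\<in>F U. (\<lambda>x. f x + g x) \<in> F U \<and> (\<lambda>x. f x * g x) \<in> F U)"
    "(\<forall>f\<in>F U. \<forall>g. (\<forall>x\<in>U. g x = f x) \<longrightarrow> g \<in> F U)"
    "(\<forall>W. openin X W \<and> W \<subseteq> U \<longrightarrow> F U \<subseteq> F W)"
    "(\<forall>g. (\<forall>x\<in>U. \<exists>W. openin X W \<and> x \<in> W \<and> W \<subseteq> U \<and> g \<in> F W) \<longrightarrow> g \<in> F U)"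
  using sh assms unfolding sheaf_space_def by simp_all

lemma sh_vals: "openin X U \<Longrightarrow> f \<in> F U \<Longrightarrow> x \<in> U \<Longrightarrow> f x \<in> K"
  using sh_parts(1) by blast
lemma sh_const: "openin X U \<Longrightarrow> c \<in> K \<Longrightarrow> (\<lambda>_. c) \<in> F U"
  using sh_parts(2) by blast
lemma sh_add: "openin X U \<Longrightarrow> f \<in> F U \<Longrightarrow> g \<in> F U \<Longrightarrow> (\<lambda>x. f x + g x) \<in> F U"
  using sh_parts(3) by blast
lemma sh_mult: "openin X U \<Longrightarrow> f \<in> F U \<Longrightarrow> g \<in> F U \<Longrightarrow> (\<lambda>x. f x * g x) \<in> F U"
  using sh_parts(3) by blast
lemma sh_agree: "openin X U \<Longrightarrow> f \<in> F U \<Longrightarrow> (\<And>x. x \<in> U \<Longrightarrow> g x = f x) \<Longrightarrow> g \<in> F U"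
  using sh_parts(4) by blast
lemma sh_restrict: "openin X U \<Longrightarrow> openin X W \<Longrightarrow> W \<subseteq> U \<Longrightarrow> f \<in> F U \<Longrightarrow> f \<in> F W"
  using sh_parts(5) by blast
lemma sh_glue: "openin X U \<Longrightarrow> (\<And>x. x \<in> U \<Longrightarrow> \<exists>W. openin X W \<and> x \<in> W \<and> W \<subseteq> U \<and> g \<in> F W) \<Longrightarrow> g \<in> F U"
  using sh_parts(6) by blast

lemma sh_cmul: "openin X U \<Longrightarrow> c \<in> K \<Longrightarrow> f \<in> F U \<Longrightarrow> (\<lambda>x. c * f x) \<in> F U"
  using sh_mult[of U "\<lambda>_. c" f] sh_const by auto

lemma sh_diff: "-1 \<in> K \<Longrightarrow> openin X U \<Longrightarrow> f \<in> F U \<Longrightarrow> g \<in> F U \<Longrightarrow> (\<lambda>x. f x - g x) \<in> F U"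
  using sh_add[of U f "\<lambda>x. -1 * g x"] sh_cmul[of U "-1" g] by simp

lemma sh_sum: "0 \<in> K \<Longrightarrow> openin X U \<Longrightarrow> (\<And>j. j < (m::nat) \<Longrightarrow> h j \<in> F U) \<Longrightarrow> (\<lambda>x. \<Sum>j<m. h j x) \<in> F U"
proof (induction m)
  case 0 then show ?case using sh_const[of U 0] by simp
next
  case (Suc m) then show ?case using sh_add[of U "\<lambda>x. \<Sum>j<m. h j x" "h m"] by simp
qed

lemma ind_of_sheaf: "openin X W \<Longrightarrow> f \<in> F W \<Longrightarrow> U \<subseteq> W \<Longrightarrow> f \<in> induced_sheaf X F M U"
  unfolding induced_sheaf_def by blast

lemma ind_const: "c \<in> K \<Longrightarrow> U \<subseteq> topspace X \<Longrightarrow> (\<lambda>_. c) \<in> induced_sheaf X F M U"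
  by (rule ind_of_sheaf[OF openin_topspace sh_const[OF openin_topspace]])

lemma ind_mono: "f \<in> induced_sheaf X F M U \<Longrightarrow> V \<subseteq> U \<Longrightarrow> f \<in> induced_sheaf X F M V"
  unfolding induced_sheaf_def by blast

lemma ind_agree: "f \<in> induced_sheaf X F M U \<Longrightarrow> (\<And>x. x \<in> U \<Longrightarrow> g x = f x) \<Longrightarrow> g \<in> induced_sheaf X F M U"
proof -
  assume f: "f \<in> induced_sheaf X F M U" and a: "\<And>x. x \<in> U \<Longrightarrow> g x = f x"
  show ?thesis unfolding induced_sheaf_def
  proof (intro CollectI ballI)
    fix p assume "p \<in> U"
    then obtain W h where "openin X W" "p \<in> W" "h \<in> F W" "\<forall>x\<in>U \<inter> W. f x = h x"
      using f unfolding induced_sheaf_def by blast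
    then show "\<exists>W. openin X W \<and> p \<in> W \<and> (\<exists>h\<in>F W. \<forall>x\<in>U \<inter> W. g x = h x)"
      using a by auto
  qed
qed

lemma ind_binop:
  assumes op: "\<And>U f g. openin X U \<Longrightarrow> f \<in> F U \<Longrightarrow> g \<in> F U \<Longrightarrow> (\<lambda>x. h (f x) (g x)) \<in> F U"
    and f: "f \<in> induced_sheaf X F M U" and g: "g \<in> induced_sheaf X F M U'"
  shows "(\<lambda>x. h (f x) (g x)) \<in> induced_sheaf X F M (U \<inter> U')"
  unfolding induced_sheaf_def
proof (intro CollectI ballI)
  fix p assume p: "p \<in> U \<inter> U'"
  obtain W1 g1 where 1: "openin X W1" "p \<in> W1" "g1 \<in> F W1" "\<forall>x\<in>U \<inter> W1. f x = g1 x"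
    using f p unfolding induced_sheaf_def by blast
  obtain W2 g2 where 2: "openin X W2" "p \<in> W2" "g2 \<in> F W2" "\<forall>x\<in>U' \<inter> W2. g x = g2 x"
    using g p unfolding induced_sheaf_def by blast
  have o: "openin X (W1 \<inter> W2)" using 1 2 by auto
  have "g1 \<in> F (W1 \<inter> W2)" "g2 \<in> F (W1 \<inter> W2)"
    using sh_restrict[of W1 "W1 \<inter> W2"] sh_restrict[of W2 "W1 \<inter> W2"] 1 2 o by auto
  then have "(\<lambda>x. h (g1 x) (g2 x)) \<in> F (W1 \<inter> W2)" using op o by blast
  then show "\<exists>W. openin X W \<and> p \<in> W \<and> (\<exists>ga\<in>F W. \<forall>x\<in>U \<inter> U' \<inter> W. h (f x) (g x) = ga x)"
    using o 1 2 by (intro exI[of _ "W1 \<inter> W2"]) auto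
qed

lemma ind_add: "f \<in> induced_sheaf X F M U \<Longrightarrow> g \<in> induced_sheaf X F M U' \<Longrightarrow> (\<lambda>x. f x + g x) \<in> induced_sheaf X F M (U \<inter> U')"
  using ind_binop[of "(+)"] sh_add by blast
lemma ind_mult: "f \<in> induced_sheaf X F M U \<Longrightarrow> g \<in> induced_sheaf X F M U' \<Longrightarrow> (\<lambda>x. f x * g x) \<in> induced_sheaf X F M (U \<inter> U')"
  using ind_binop[of "(*)"] sh_mult by blast

lemma ind_open: assumes "openin X U" "f \<in> induced_sheaf X F M U" shows "f \<in> F U"
proof (rule sh_glue[OF assms(1)])
  fix x assume x: "x \<in> U"
  obtain W g where W: "openin X W" "x \<in> W" "g \<in> F W" "\<forall>y\<in>U \<inter> W. f y = g y"
    using assms(2) x unfolding induced_sheaf_def by blast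
  have o: "openin X (W \<inter> U)" using W assms by auto
  have "g \<in> F (W \<inter> U)" using sh_restrict[OF W(1) o] W by auto
  then have "f \<in> F (W \<inter> U)" using sh_agree[OF o] W by auto
  then show "\<exists>W. openin X W \<and> x \<in> W \<and> W \<subseteq> U \<and> f \<in> F W" using o x W by blast
qed

lemma ind_sum: "0 \<in> K \<Longrightarrow> U \<subseteq> topspace X \<Longrightarrow> (\<And>j. j < (m::nat) \<Longrightarrow> h j \<in> induced_sheaf X F M U) \<Longrightarrow> (\<lambda>x. \<Sum>j<m. h j x) \<in> induced_sheaf X F M U"
proof (induction m)
  case 0 then show ?case using ind_const[of 0 U] by simp
next
  case (Suc m) then show ?case using ind_add[of "\<lambda>x. \<Sum>j<m. h j x" M U "h m" U] by simp
qed

end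



context
  fixes K :: "complex set" and Y :: "pt topology" and G :: sheaf and p :: pt and t
  assumes der: "derivation K Y G p t"
begin

lemma der_parts:
  "\<And>U f. germ_rep Y G p (U, f) \<Longrightarrow> t (U, f) \<in> K"
  "\<And>U f U' g. germ_rep Y G p (U, f) \<Longrightarrow> germ_rep Y G p (U', g) \<Longrightarrow>
        (\<exists>W. openin Y W \<and> p \<in> W \<and> W \<subseteq> U \<inter> U' \<and> (\<forall>x\<in>W. f x = g x))
        \<Longrightarrow> t (U, f) = t (U', g)"
  "\<And>U f U' g. germ_rep Y G p (U, f) \<Longrightarrow> germ_rep Y G p (U', g) \<Longrightarrow>
        t (U \<inter> U', \<lambda>x. f x + g x) = t (U, f) + t (U', g)"
  "\<And>U f U' g. germ_rep Y G p (U, f) \<Longrightarrow> germ_rep Y G p (U', g) \<Longrightarrow>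
        t (U \<inter> U', \<lambda>x. f x * g x) = f p * t (U', g) + g p * t (U, f)"
  "\<And>U f c. germ_rep Y G p (U, f) \<Longrightarrow> c \<in> K \<Longrightarrow> t (U, \<lambda>x. c * f x) = c * t (U, f)"
  using der unfolding derivation_def by blast+

lemma der_add1: "germ_rep Y G p (U, f) \<Longrightarrow> germ_rep Y G p (U, g) \<Longrightarrow>
        t (U, \<lambda>x. f x + g x) = t (U, f) + t (U, g)"
  using der_parts(3)[of U f U g] by simp

lemma der_one: "germ_rep Y G p (U, \<lambda>_. 1) \<Longrightarrow> t (U, \<lambda>_. 1) = 0"
  using der_parts(4)[of U "\<lambda>_. 1" U "\<lambda>_. 1"] by simp

lemma der_const: "germ_rep Y G p (U, \<lambda>_. 1) \<Longrightarrow> c \<in> K \<Longrightarrow> t (U, \<lambda>_. c) = 0"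
  using der_parts(5)[of U "\<lambda>_. 1" c] der_one by simp

lemma der_sum:
  assumes add: "\<And>f g. f \<in> G U \<Longrightarrow> g \<in> G U \<Longrightarrow> (\<lambda>x. f x + g x) \<in> G U"
    and one: "(\<lambda>_. 1) \<in> G U" and zero: "(\<lambda>_. 0) \<in> G U" and K0: "0 \<in> K"
    and U: "openin Y U" "p \<in> U"
  shows "(\<And>j. j < (m::nat) \<Longrightarrow> h j \<in> G U) \<Longrightarrow>
     (\<lambda>x. \<Sum>j<m. h j x) \<in> G U \<and> t (U, \<lambda>x. \<Sum>j<m. h j x) = (\<Sum>j<m. t (U, h j))"
proof (induction m)
  case 0
  have "t (U, \<lambda>_. 0) = 0" using der_const[of U 0] one U K0 unfolding germ_rep_def by simp
  then show ?case using zero by simp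
next
  case (Suc m)
  then have IH: "(\<lambda>x. \<Sum>j<m. h j x) \<in> G U" "t (U, \<lambda>x. \<Sum>j<m. h j x) = (\<Sum>j<m. t (U, h j))"
    by auto
  have hm: "h m \<in> G U" using Suc by simp
  have "t (U, \<lambda>x. (\<Sum>j<m. h j x) + h m x) = t (U, \<lambda>x. \<Sum>j<m. h j x) + t (U, h m)"
    using der_add1[of U "\<lambda>x. \<Sum>j<m. h j x" "h m"] IH hm U unfolding germ_rep_def by simp
  then show ?case using IH hm add[OF IH(1) hm] by simp
qed

end

definition evec :: "nat \<Rightarrow> pt" where "evec i = (\<lambda>j. if j = i then 1 else 0)"

context
  fixes K :: "complex set"
  assumes K: "K = \<real> \<or> K = UNIV"
begin

lemma coord_kdual: "i < n \<Longrightarrow> (\<lambda>x. x i) \<in> kdual K n"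
  unfolding kdual_def kvec_def by auto

lemma evec_kvec: "i < n \<Longrightarrow> evec i \<in> kvec K n"
  using Kf[OF K] unfolding evec_def kvec_def by auto

lemma lin_rep:
  assumes phi: "\<phi> \<in> kdual K n" and x: "x \<in> kvec K n"
  shows "\<phi> x = (\<Sum>i<n. x i * \<phi> (evec i))"
proof -
  have lin: "\<And>a b. a \<in> kvec K n \<Longrightarrow> b \<in> kvec K n \<Longrightarrow> \<phi> (\<lambda>i. a i + b i) = \<phi> a + \<phi> b"
    "\<And>c a. c \<in> K \<Longrightarrow> a \<in> kvec K n \<Longrightarrow> \<phi> (\<lambda>i. c * a i) = c * \<phi> a"
    using phi unfolding kdual_def by blast+
  define tr where "tr k = (\<lambda>j. if j < k then x j else 0)" for k
  have trk: "tr k \<in> kvec K n" for k using x Kf[OF K] unfolding tr_def kvec_def by auto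
  have "k \<le> n \<Longrightarrow> \<phi> (tr k) = (\<Sum>i<k. x i * \<phi> (evec i))" for k
  proof (induction k)
    case 0
    have z: "tr 0 = (\<lambda>i. tr 0 i + tr 0 i)" unfolding tr_def by simp
    have "\<phi> (tr 0) = \<phi> (tr 0) + \<phi> (tr 0)" using lin(1)[OF trk trk] z by metis
    then show ?case by simp
  next
    case (Suc k)
    have xk: "x k \<in> K" using x Suc.prems unfolding kvec_def by auto
    have e: "(\<lambda>i. x k * evec k i) \<in> kvec K n"
      using evec_kvec[of k n] Suc.prems xk Kf[OF K] unfolding kvec_def by auto
    have eq: "tr (Suc k) = (\<lambda>i. tr k i + x k * evec k i)"
      unfolding tr_def evec_def by (rule ext) (simp add: less_Suc_eq)
    have "\<phi> (tr (Suc k)) = \<phi> (tr k) + \<phi> (\<lambda>i. x k * evec k i)"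
      using lin(1)[OF trk e] eq by simp
    also have "\<phi> (\<lambda>i. x k * evec k i) = x k * \<phi> (evec k)"
      using lin(2)[OF xk evec_kvec[of k n]] Suc.prems by simp
    finally show ?case using Suc by simp
  qed
  moreover have "tr n = x" using x unfolding tr_def kvec_def by auto
  ultimately show ?thesis by auto
qed

lemma kvec_ext:
  assumes "w \<in> kvec K n" "w' \<in> kvec K n" "\<And>\<phi>. \<phi> \<in> kdual K n \<Longrightarrow> \<phi> w = \<phi> w'"
  shows "w = w'"
proof
  fix i show "w i = w' i"
  proof (cases "i < n")
    case True then show ?thesis using assms(3)[OF coord_kdual[OF True]] by simp
  next
    case False then show ?thesis using assms(1,2) unfolding kvec_def by auto
  qed
qed

lemma fst_join: "p \<in> kvec K n \<Longrightarrow> fstp n (join n p v) = p"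
  unfolding fstp_def join_def kvec_def by auto
lemma snd_join: "v \<in> kvec K n \<Longrightarrow> sndp n (join n p v) = v"
  unfolding sndp_def join_def kvec_def by auto
lemma join_kvec: "p \<in> kvec K n \<Longrightarrow> v \<in> kvec K n \<Longrightarrow> join n p v \<in> kvec K (2 * n)"
  unfolding join_def kvec_def by auto
lemma fstp_kvec: "z \<in> kvec K (2 * n) \<Longrightarrow> fstp n z \<in> kvec K n"
  using Kf[OF K] unfolding fstp_def kvec_def by auto
lemma sndp_kvec: "z \<in> kvec K (2 * n) \<Longrightarrow> sndp n z \<in> kvec K n"
  using Kf[OF K] unfolding sndp_def kvec_def by auto
lemma join_split: "z \<in> kvec K (2 * n) \<Longrightarrow> join n (fstp n z) (sndp n z) = z"
  unfolding join_def fstp_def sndp_def kvec_def by auto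

lemma fstp_kdual: assumes "\<phi> \<in> kdual K n" shows "\<phi> \<circ> fstp n \<in> kdual K (2 * n)"
proof -
  have a: "fstp n (\<lambda>i. x i + y i) = (\<lambda>i. fstp n x i + fstp n y i)" for x y
    unfolding fstp_def by auto
  have b: "fstp n (\<lambda>i. c * x i) = (\<lambda>i. c * fstp n x i)" for c x
    unfolding fstp_def by auto
  show ?thesis using assms fstp_kvec unfolding kdual_def by (auto simp: a b)
qed

end



context
  fixes K :: "complex set" and T :: "nat \<Rightarrow> pt topology" and S :: "nat \<Rightarrow> sheaf"
  assumes K: "K = \<real> \<or> K = UNIV" and fam: "taylor_family K T S"
begin

lemma tf_body: "topspace (T n) = kvec K n \<and> sheaf_space K (T n) (S n) \<and> local_sheaf (T n) (S n)
    \<and> (\<forall>f\<in>S n (kvec K n). continuous_map (T n) (top_of_set K) f)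
    \<and> (\<forall>X'. topspace X' = kvec K n \<and>
           (\<forall>f\<in>S n (kvec K n). continuous_map X' (top_of_set K) f)
           \<longrightarrow> (\<forall>U. openin (T n) U \<longrightarrow> openin X' U))
    \<and> kdual K n \<subseteq> S n (kvec K n)
    \<and> (\<forall>U m \<psi>. openin (T n) U \<and> \<psi> ` U \<subseteq> kvec K m \<longrightarrow>
         (smooth_map (subtopology (T n) U) (induced_sheaf (T n) (S n) U) (T m) (S m) \<psi>
          \<longleftrightarrow> (\<forall>\<phi>\<in>kdual K m. \<phi> \<circ> \<psi> \<in> S n U)))
    \<and> (\<forall>p\<in>kvec K n.
         (\<forall>\<phi>\<in>kdual K n. in_msq (T n) (S n) p (\<lambda>x. \<phi> x - \<phi> p) \<longrightarrow> (\<forall>x\<in>kvec K n. \<phi> x = 0))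
       \<and> (\<forall>U f. openin (T n) U \<and> p \<in> U \<and> f \<in> S n U \<and> f p = 0 \<longrightarrow>
            (\<exists>\<phi>\<in>kdual K n. in_msq (T n) (S n) p (\<lambda>x. f x - (\<phi> x - \<phi> p)))))
    \<and> (\<forall>U f. openin (T n) U \<and> f \<in> S n U \<longrightarrow>
         (\<exists>D \<in> S (2 * n) ((\<lambda>(p, v). join n p v) ` (U \<times> kvec K n)).
            \<forall>p\<in>U. \<forall>\<phi>\<in>kdual K n.
              in_msq (T n) (S n) p (\<lambda>x. f x - f p - (\<phi> x - \<phi> p)) \<longrightarrow>
              (\<forall>v\<in>kvec K n. D (join n p v) = \<phi> v)))"
  using fam unfolding taylor_family_def by (rule spec)

lemma tf_top: "topspace (T n) = kvec K n" by (rule tf_body[of n, THEN conjunct1])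
lemma tf_sh: "sheaf_space K (T n) (S n)" by (rule tf_body[of n, THEN conjunct2, THEN conjunct1])
lemma tf_dual: "kdual K n \<subseteq> S n (kvec K n)" by (rule tf_body[of n, THEN conjunct2, THEN conjunct2, THEN conjunct2, THEN conjunct2, THEN conjunct2, THEN conjunct1])
lemma tf_smooth0: "\<forall>U m \<psi>. openin (T n) U \<and> \<psi> ` U \<subseteq> kvec K m \<longrightarrow>
         (smooth_map (subtopology (T n) U) (induced_sheaf (T n) (S n) U) (T m) (S m) \<psi>
          \<longleftrightarrow> (\<forall>\<phi>\<in>kdual K m. \<phi> \<circ> \<psi> \<in> S n U))" by (rule tf_body[of n, THEN conjunct2, THEN conjunct2, THEN conjunct2, THEN conjunct2, THEN conjunct2, THEN conjunct2, THEN conjunct1])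
lemma tf_smooth: "openin (T n) U \<Longrightarrow> \<psi> ` U \<subseteq> kvec K m \<Longrightarrow> (\<And>\<phi>. \<phi> \<in> kdual K m \<Longrightarrow> \<phi> \<circ> \<psi> \<in> S n U) \<Longrightarrow>
   smooth_map (subtopology (T n) U) (induced_sheaf (T n) (S n) U) (T m) (S m) \<psi>"
  using tf_smooth0[of n] by blast
lemma tf_4a: "\<forall>p\<in>kvec K n.
       (\<forall>U f. openin (T n) U \<and> p \<in> U \<and> f \<in> S n U \<and> f p = 0 \<longrightarrow>
            (\<exists>\<phi>\<in>kdual K n. in_msq (T n) (S n) p (\<lambda>x. f x - (\<phi> x - \<phi> p))))"
  using tf_body[of n, THEN conjunct2, THEN conjunct2, THEN conjunct2, THEN conjunct2, THEN conjunct2, THEN conjunct2, THEN conjunct2, THEN conjunct1] by blast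
lemma tf_4: "p \<in> U \<Longrightarrow> openin (T n) U \<Longrightarrow> f \<in> S n U \<Longrightarrow> f p = 0 \<Longrightarrow>
   \<exists>\<phi>\<in>kdual K n. in_msq (T n) (S n) p (\<lambda>x. f x - (\<phi> x - \<phi> p))"
proof -
  assume a: "p \<in> U" "openin (T n) U" "f \<in> S n U" "f p = 0"
  have "p \<in> kvec K n" using a openin_subset tf_top by blast
  then show ?thesis using tf_4a[of n] a by blast
qed
lemma tf_5a: "\<forall>U f. openin (T n) U \<and> f \<in> S n U \<longrightarrow>
         (\<exists>D \<in> S (2 * n) ((\<lambda>(p, v). join n p v) ` (U \<times> kvec K n)).
            \<forall>p\<in>U. \<forall>\<phi>\<in>kdual K n.
              in_msq (T n) (S n) p (\<lambda>x. f x - f p - (\<phi> x - \<phi> p)) \<longrightarrow>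
              (\<forall>v\<in>kvec K n. D (join n p v) = \<phi> v))"
  by (rule tf_body[of n, THEN conjunct2, THEN conjunct2, THEN conjunct2, THEN conjunct2, THEN conjunct2, THEN conjunct2, THEN conjunct2, THEN conjunct2])
lemma tf_5: "openin (T n) U \<Longrightarrow> f \<in> S n U \<Longrightarrow>
         (\<exists>D \<in> S (2 * n) ((\<lambda>(p, v). join n p v) ` (U \<times> kvec K n)).
            \<forall>p\<in>U. \<forall>\<phi>\<in>kdual K n.
              in_msq (T n) (S n) p (\<lambda>x. f x - f p - (\<phi> x - \<phi> p)) \<longrightarrow>
              (\<forall>v\<in>kvec K n. D (join n p v) = \<phi> v))"
  using tf_5a[of n] by blast

lemma dual_in_S: "\<phi> \<in> kdual K n \<Longrightarrow> \<phi> \<in> S n (kvec K n)" using tf_dual by blast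

lemma open_kvec: "openin (T n) (kvec K n)" using openin_topspace[of "T n"] tf_top by simp

lemma msq_kill:
  assumes M: "M \<subseteq> kvec K n"
    and der: "derivation K (subtopology (T n) M) (induced_sheaf (T n) (S n) M) p t"
    and U: "openin (subtopology (T n) M) U" "p \<in> U"
    and g: "g \<in> induced_sheaf (T n) (S n) M U" and msq: "in_msq (T n) (S n) p g"
  shows "t (U, g) = 0"
proof -
  note sh = tf_sh[of n]
  have "\<exists>W (m::nat) a b. openin (T n) W \<and> p \<in> W \<and>
        (\<forall>j<m. a j \<in> S n W \<and> b j \<in> S n W \<and> a j p = 0 \<and> b j p = 0) \<and>
        (\<forall>x\<in>W. g x = (\<Sum>j<m. a j x * b j x))"
    using msq unfolding in_msq_def .
  then obtain W m a b where Wab: "openin (T n) W \<and> p \<in> W \<and>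
        (\<forall>j<(m::nat). a j \<in> S n W \<and> b j \<in> S n W \<and> a j p = 0 \<and> b j p = 0) \<and>
        (\<forall>x\<in>W. g x = (\<Sum>j<m. a j x * b j x))"
    by (elim exE) assumption
  then have W: "openin (T n) W" "p \<in> W"
    and ab: "\<forall>j<m. a j \<in> S n W \<and> b j \<in> S n W \<and> a j p = 0 \<and> b j p = 0"
    and eq: "\<forall>x\<in>W. g x = (\<Sum>j<m. a j x * b j x)" by simp_all
  define U' where "U' = U \<inter> W"
  have U'o: "openin (subtopology (T n) M) U'"
  proof -
    have "\<exists>Tt. openin (T n) Tt \<and> U = Tt \<inter> M" using U(1) openin_subtopology by blast
    then obtain Tt where Tt: "openin (T n) Tt \<and> U = Tt \<inter> M" by (elim exE) assumption
    have o: "openin (T n) (Tt \<inter> W)" using openin_Int[OF conjunct1[OF Tt] W(1)] .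
    have e: "U' = (Tt \<inter> W) \<inter> M" unfolding U'_def using conjunct2[OF Tt] by auto
    show ?thesis unfolding openin_subtopology using o e by blast
  qed
  have pU': "p \<in> U'" using U W unfolding U'_def by auto
  have U'sub: "U' \<subseteq> topspace (T n)" using openin_subset[OF U'o] by simp
  define G where "G = induced_sheaf (T n) (S n) M"
  have UW': "U' \<subseteq> W" unfolding U'_def by blast
  have aG: "a j \<in> G U'" "b j \<in> G U'" if "j < m" for j
    unfolding G_def using ab that by (auto intro: ind_of_sheaf[OF sh W(1) _ UW'])
  have hG: "(\<lambda>x. a j x * b j x) \<in> G U'" if "j < m" for j
    using ind_mult[OF sh aG(1)[OF that, unfolded G_def] aG(2)[OF that, unfolded G_def]] unfolding G_def by simp
  have add: "\<And>f g. f \<in> G U' \<Longrightarrow> g \<in> G U' \<Longrightarrow> (\<lambda>x. f x + g x) \<in> G U'"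
  proof -
    fix f g assume "f \<in> G U'" "g \<in> G U'"
    then show "(\<lambda>x. f x + g x) \<in> G U'" using ind_add[OF sh, of f M U' g U'] unfolding G_def by simp
  qed
  have one: "(\<lambda>_. 1) \<in> G U'" unfolding G_def by (rule ind_const[OF sh Kf(2)[OF K] U'sub])
  have zero: "(\<lambda>_. 0) \<in> G U'" unfolding G_def by (rule ind_const[OF sh Kf(1)[OF K] U'sub])
  have s: "(\<lambda>x. \<Sum>j<m. a j x * b j x) \<in> G U' \<and>
      t (U', \<lambda>x. \<Sum>j<m. a j x * b j x) = (\<Sum>j<m. t (U', \<lambda>x. a j x * b j x))"
  proof (rule der_sum[OF der[folded G_def]])
    show "\<And>f g. f \<in> G U' \<Longrightarrow> g \<in> G U' \<Longrightarrow> (\<lambda>x. f x + g x) \<in> G U'" by (rule add)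
    show "(\<lambda>_. 1) \<in> G U'" by (rule one)
    show "(\<lambda>_. 0) \<in> G U'" by (rule zero)
    show "0 \<in> K" by (rule Kf(1)[OF K])
    show "openin (subtopology (T n) M) U'" by (rule U'o)
    show "p \<in> U'" by (rule pU')
    show "\<And>j. j < m \<Longrightarrow> (\<lambda>x. a j x * b j x) \<in> G U'" by (rule hG)
  qed
  have z: "t (U', \<lambda>x. a j x * b j x) = 0" if "j < m" for j
  proof -
    have "germ_rep (subtopology (T n) M) G p (U', a j)" "germ_rep (subtopology (T n) M) G p (U', b j)"
      using aG[OF that] U'o pU' unfolding germ_rep_def by simp_all
    from der_parts(4)[OF der[folded G_def] this] show ?thesis using ab that by simp
  qed
  have "t (U, g) = t (U', \<lambda>x. \<Sum>j<m. a j x * b j x)"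
  proof (rule der_parts(2)[OF der[folded G_def]])
    show "germ_rep (subtopology (T n) M) G p (U, g)" using U g unfolding germ_rep_def G_def by simp
    show "germ_rep (subtopology (T n) M) G p (U', \<lambda>x. \<Sum>j<m. a j x * b j x)"
      using s U'o pU' unfolding germ_rep_def by simp
    show "\<exists>W. openin (subtopology (T n) M) W \<and> p \<in> W \<and> W \<subseteq> U \<inter> U' \<and>
        (\<forall>x\<in>W. g x = (\<Sum>j<m. a j x * b j x))"
      using U'o pU' eq unfolding U'_def by (intro exI[of _ "U \<inter> W"]) auto
  qed
  then show ?thesis using s z by simp
qed

lemma der_linear:
  assumes M: "M \<subseteq> kvec K n"
    and der: "derivation K (subtopology (T n) M) (induced_sheaf (T n) (S n) M) p t"
    and pM: "p \<in> M"
    and W: "openin (T n) W" "p \<in> W" and f: "f \<in> S n W"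
    and phi: "\<phi> \<in> kdual K n"
    and msq: "in_msq (T n) (S n) p (\<lambda>x. f x - f p - (\<phi> x - \<phi> p))"
  shows "t (M \<inter> W, f) = t (M, \<phi>)"
proof -
  note sh = tf_sh[of n]
  note KK = Kf[OF K]
  define G where "G = induced_sheaf (T n) (S n) M"
  define U where "U = M \<inter> W"
  have Uo: "openin (subtopology (T n) M) U" unfolding U_def using openin_subtopology_Int2[OF W(1)] .
  have pU: "p \<in> U" using pM W unfolding U_def by auto
  have Wk: "W \<subseteq> kvec K n" using W openin_subset tf_top by blast
  have phiW: "\<phi> \<in> S n W" using sh_restrict[OF sh open_kvec W(1) Wk dual_in_S[OF phi]] .
  have fp: "f p \<in> K" using sh_vals[OF sh W(1) f W(2)] .
  have php: "\<phi> p \<in> K" using phi Wk W(2) unfolding kdual_def by blast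
  define c where "c = f p - \<phi> p"
  have cK: "c \<in> K" using fp php KK unfolding c_def by (metis diff_conv_add_uminus)
  define r where "r = (\<lambda>x. f x - f p - (\<phi> x - \<phi> p))"
  define q where "q = (\<lambda>x. \<phi> x + c)"
  have rW: "r \<in> S n W" unfolding r_def
    using sh_diff[OF sh KK(3) W(1) sh_diff[OF sh KK(3) W(1) f sh_const[OF sh W(1) fp]]
        sh_diff[OF sh KK(3) W(1) phiW sh_const[OF sh W(1) php]]] by simp
  have qW: "q \<in> S n W" unfolding q_def using sh_add[OF sh W(1) phiW sh_const[OF sh W(1) cK]] .
  have fe: "f = (\<lambda>x. r x + q x)" unfolding r_def q_def c_def by (rule ext) simp
  have MW: "M \<inter> W \<subseteq> topspace (T n)" using Wk tf_top by blast
  have UW: "U \<subseteq> W" unfolding U_def by blast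
  have rG: "r \<in> G U" unfolding G_def by (rule ind_of_sheaf[OF sh W(1) rW UW])
  have qG: "q \<in> G U" unfolding G_def by (rule ind_of_sheaf[OF sh W(1) qW UW])
  have phiG: "\<phi> \<in> G U" unfolding G_def by (rule ind_of_sheaf[OF sh W(1) phiW UW])
  have cG: "(\<lambda>_. c) \<in> G U" unfolding G_def U_def by (rule ind_const[OF sh cK MW])
  have oneG: "(\<lambda>_. 1) \<in> G U" unfolding G_def U_def by (rule ind_const[OF sh KK(2) MW])
  have "t (U, f) = t (U, r) + t (U, q)"
    using der_add1[OF der[folded G_def], of U r q] rG qG Uo pU unfolding germ_rep_def fe by simp
  also have "t (U, r) = 0"
    using msq_kill[OF M der Uo pU rG[unfolded G_def]] msq unfolding r_def by simp
  also have "t (U, q) = t (U, \<phi>) + t (U, \<lambda>_. c)"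
    using der_add1[OF der[folded G_def], of U \<phi> "\<lambda>_. c"] phiG cG Uo pU unfolding germ_rep_def q_def by simp
  also have "t (U, \<lambda>_. c) = 0"
    using der_const[OF der[folded G_def], of U c] oneG Uo pU cK unfolding germ_rep_def by simp
  also have "t (U, \<phi>) = t (M, \<phi>)"
  proof (rule der_parts(2)[OF der])
    show "germ_rep (subtopology (T n) M) (induced_sheaf (T n) (S n) M) p (U, \<phi>)"
      using phiG Uo pU unfolding germ_rep_def G_def by simp
    have "openin (subtopology (T n) M) (M \<inter> kvec K n)" using openin_subtopology_Int2[OF open_kvec] .
    then have "openin (subtopology (T n) M) M" using M by (simp add: inf.absorb1)
    then show "germ_rep (subtopology (T n) M) (induced_sheaf (T n) (S n) M) p (M, \<phi>)"
      using ind_of_sheaf[OF sh open_kvec dual_in_S[OF phi] M] pM unfolding germ_rep_def by simp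
    show "\<exists>W. openin (subtopology (T n) M) W \<and> p \<in> W \<and> W \<subseteq> U \<inter> M \<and> (\<forall>x\<in>W. \<phi> x = \<phi> x)"
      using Uo pU unfolding U_def by auto
  qed
  finally show ?thesis unfolding U_def by simp
qed

end



lemma derivation_intro:
  assumes "\<forall>Uf. \<not> germ_rep X F p Uf \<longrightarrow> t Uf = 0"
   "\<forall>U f. germ_rep X F p (U, f) \<longrightarrow> t (U, f) \<in> K"
   "\<forall>U f U' g. germ_rep X F p (U, f) \<and> germ_rep X F p (U', g) \<and>
        (\<exists>W. openin X W \<and> p \<in> W \<and> W \<subseteq> U \<inter> U' \<and> (\<forall>x\<in>W. f x = g x))
        \<longrightarrow> t (U, f) = t (U', g)"
   "\<forall>U f U' g. germ_rep X F p (U, f) \<and> germ_rep X F p (U', g) \<longrightarrow>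
        t (U \<inter> U', \<lambda>x. f x + g x) = t (U, f) + t (U', g)
      \<and> t (U \<inter> U', \<lambda>x. f x * g x) = f p * t (U', g) + g p * t (U, f)"
   "\<forall>U f c. germ_rep X F p (U, f) \<and> c \<in> K \<longrightarrow> t (U, \<lambda>x. c * f x) = c * t (U, f)"
  shows "derivation K X F p t"
  unfolding derivation_def using assms by (intro conjI) assumption+

lemma openin_sub_self: "M \<subseteq> topspace X \<Longrightarrow> openin (subtopology X M) M"
  using openin_subtopology_Int2[OF openin_topspace, of X M] by (simp add: inf.absorb1)

lemma smooth_cont: "smooth_map X F Y G \<psi> \<Longrightarrow> continuous_map X Y \<psi>"
  unfolding smooth_map_def by simp
lemma smooth_pull: "smooth_map X F Y G \<psi> \<Longrightarrow> openin Y U \<Longrightarrow> f \<in> G U \<Longrightarrow> f \<circ> \<psi> \<in> F {x \<in> topspace X. \<psi> x \<in> U}"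
  unfolding smooth_map_def by blast

context
  fixes K :: "complex set" and T :: "nat \<Rightarrow> pt topology" and S :: "nat \<Rightarrow> sheaf"
  assumes K: "K = \<real> \<or> K = UNIV" and fam: "taylor_family K T S"
begin

lemma pushforward:
  assumes M1k: "M1 \<subseteq> kvec K n1" and M2k: "M2 \<subseteq> kvec K n2"
    and psi: "smooth_map (subtopology (T n1) M1) (induced_sheaf (T n1) (S n1) M1)
                         (subtopology (T n2) M2) (induced_sheaf (T n2) (S n2) M2) \<psi>"
    and der: "derivation K (subtopology (T n1) M1) (induced_sheaf (T n1) (S n1) M1) p t"
    and pM: "p \<in> M1"
  shows "derivation K (subtopology (T n2) M2) (induced_sheaf (T n2) (S n2) M2) (\<psi> p)
      (\<lambda>Uf. if germ_rep (subtopology (T n2) M2) (induced_sheaf (T n2) (S n2) M2) (\<psi> p) Uf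
            then t ({x \<in> M1. \<psi> x \<in> fst Uf}, snd Uf \<circ> \<psi>) else 0)"
   (is "derivation K ?X2 ?F2 (\<psi> p) ?t2")
    and "\<And>\<phi>. \<phi> \<in> kdual K n2 \<Longrightarrow> (if germ_rep (subtopology (T n2) M2) (induced_sheaf (T n2) (S n2) M2) (\<psi> p) (M2, \<phi>)
            then t ({x \<in> M1. \<psi> x \<in> M2}, \<phi> \<circ> \<psi>) else 0) = t (M1, \<phi> \<circ> \<psi>)"
proof -
  define X1 where "X1 = subtopology (T n1) M1"
  define F1 where "F1 = induced_sheaf (T n1) (S n1) M1"
  define X2 where "X2 = subtopology (T n2) M2"
  define F2 where "F2 = induced_sheaf (T n2) (S n2) M2"
  define t2 where "t2 = (\<lambda>Uf. if germ_rep X2 F2 (\<psi> p) Uf then t ({x \<in> M1. \<psi> x \<in> fst Uf}, snd Uf \<circ> \<psi>) else 0)"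
  note sh2 = tf_sh[OF K fam, of n2]
  note der1 = der[folded X1_def F1_def]
  have top1: "topspace X1 = M1" unfolding X1_def using M1k tf_top[OF K fam] by auto
  have top2: "topspace X2 = M2" unfolding X2_def using M2k tf_top[OF K fam] by auto
  have psi': "smooth_map X1 F1 X2 F2 \<psi>" using psi unfolding X1_def F1_def X2_def F2_def .
  have cont: "continuous_map X1 X2 \<psi>" using smooth_cont[OF psi'] .
  have psiM: "\<psi> x \<in> M2" if "x \<in> M1" for x
    using continuous_map_image_subset_topspace[OF cont] that top1 top2 by auto
  have pre_open: "openin X1 {x \<in> M1. \<psi> x \<in> U}" if "openin X2 U" for U
    using openin_continuous_map_preimage[OF cont that] top1 by simp
  have pre_sh: "f \<circ> \<psi> \<in> F1 {x \<in> M1. \<psi> x \<in> U}" if "openin X2 U" "f \<in> F2 U" for U f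
    using smooth_pull[OF psi' that] top1 by simp
  have gr: "germ_rep X1 F1 p ({x \<in> M1. \<psi> x \<in> U}, f \<circ> \<psi>)" if "germ_rep X2 F2 (\<psi> p) (U, f)" for U f
    using that pre_open pre_sh pM unfolding germ_rep_def by simp
  have t2_eq: "t2 (U, f) = t ({x \<in> M1. \<psi> x \<in> U}, f \<circ> \<psi>)" if "germ_rep X2 F2 (\<psi> p) (U, f)" for U f
    using that unfolding t2_def by simp
  have "derivation K X2 F2 (\<psi> p) t2"
  proof (rule derivation_intro)
    show "\<forall>Uf. \<not> germ_rep X2 F2 (\<psi> p) Uf \<longrightarrow> t2 Uf = 0" unfolding t2_def by simp
    show "\<forall>U f. germ_rep X2 F2 (\<psi> p) (U, f) \<longrightarrow> t2 (U, f) \<in> K"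
      using t2_eq der_parts(1)[OF der1 gr] by simp
    show "\<forall>U f U' g. germ_rep X2 F2 (\<psi> p) (U, f) \<and> germ_rep X2 F2 (\<psi> p) (U', g) \<and>
        (\<exists>W. openin X2 W \<and> \<psi> p \<in> W \<and> W \<subseteq> U \<inter> U' \<and> (\<forall>x\<in>W. f x = g x))
        \<longrightarrow> t2 (U, f) = t2 (U', g)"
    proof (intro allI impI)
      fix U f U' g
      assume a: "germ_rep X2 F2 (\<psi> p) (U, f) \<and> germ_rep X2 F2 (\<psi> p) (U', g) \<and>
        (\<exists>W. openin X2 W \<and> \<psi> p \<in> W \<and> W \<subseteq> U \<inter> U' \<and> (\<forall>x\<in>W. f x = g x))"
      then have ex: "\<exists>W. openin X2 W \<and> \<psi> p \<in> W \<and> W \<subseteq> U \<inter> U' \<and> (\<forall>x\<in>W. f x = g x)"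
        by (rule conjunct2[OF conjunct2])
      then obtain W where W: "openin X2 W \<and> \<psi> p \<in> W \<and> W \<subseteq> U \<inter> U' \<and> (\<forall>x\<in>W. f x = g x)"
        by (elim exE) assumption
      have "t ({x \<in> M1. \<psi> x \<in> U}, f \<circ> \<psi>) = t ({x \<in> M1. \<psi> x \<in> U'}, g \<circ> \<psi>)"
      proof (rule der_parts(2)[OF der1 gr gr])
        show "germ_rep X2 F2 (\<psi> p) (U, f)" "germ_rep X2 F2 (\<psi> p) (U', g)" using a by simp_all
        show "\<exists>Wa. openin X1 Wa \<and> p \<in> Wa \<and> Wa \<subseteq> {x \<in> M1. \<psi> x \<in> U} \<inter> {x \<in> M1. \<psi> x \<in> U'} \<and>
           (\<forall>x\<in>Wa. (f \<circ> \<psi>) x = (g \<circ> \<psi>) x)"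
          using W pre_open[of W] pM by (intro exI[of _ "{x \<in> M1. \<psi> x \<in> W}"]) auto
      qed
      then show "t2 (U, f) = t2 (U', g)" using t2_eq a by simp
    qed
    show "\<forall>U f U' g. germ_rep X2 F2 (\<psi> p) (U, f) \<and> germ_rep X2 F2 (\<psi> p) (U', g) \<longrightarrow>
        t2 (U \<inter> U', \<lambda>x. f x + g x) = t2 (U, f) + t2 (U', g)
      \<and> t2 (U \<inter> U', \<lambda>x. f x * g x) = f (\<psi> p) * t2 (U', g) + g (\<psi> p) * t2 (U, f)"
    proof (intro allI impI)
      fix U f U' g
      assume a: "germ_rep X2 F2 (\<psi> p) (U, f) \<and> germ_rep X2 F2 (\<psi> p) (U', g)"
      then have a1: "germ_rep X2 F2 (\<psi> p) (U, f)" and a2: "germ_rep X2 F2 (\<psi> p) (U', g)" by simp_all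
      have ga: "germ_rep X2 F2 (\<psi> p) (U \<inter> U', \<lambda>x. f x + g x)"
        using a1 a2 ind_add[OF sh2, of f M2 U g U'] unfolding germ_rep_def F2_def by auto
      have gm: "germ_rep X2 F2 (\<psi> p) (U \<inter> U', \<lambda>x. f x * g x)"
        using a1 a2 ind_mult[OF sh2, of f M2 U g U'] unfolding germ_rep_def F2_def by auto
      have pre: "{x \<in> M1. \<psi> x \<in> U \<inter> U'} = {x \<in> M1. \<psi> x \<in> U} \<inter> {x \<in> M1. \<psi> x \<in> U'}" by blast
      have e1: "(\<lambda>x. f x + g x) \<circ> \<psi> = (\<lambda>x. (f \<circ> \<psi>) x + (g \<circ> \<psi>) x)" by (simp add: o_def)
      have e2: "(\<lambda>x. f x * g x) \<circ> \<psi> = (\<lambda>x. (f \<circ> \<psi>) x * (g \<circ> \<psi>) x)" by (simp add: o_def)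
      show "t2 (U \<inter> U', \<lambda>x. f x + g x) = t2 (U, f) + t2 (U', g)
      \<and> t2 (U \<inter> U', \<lambda>x. f x * g x) = f (\<psi> p) * t2 (U', g) + g (\<psi> p) * t2 (U, f)"
        using t2_eq[OF ga] t2_eq[OF gm] t2_eq[OF a1] t2_eq[OF a2]
          der_parts(3)[OF der1 gr[OF a1] gr[OF a2]] der_parts(4)[OF der1 gr[OF a1] gr[OF a2]]
        unfolding pre e1 e2 by simp
    qed
    show "\<forall>U f c. germ_rep X2 F2 (\<psi> p) (U, f) \<and> c \<in> K \<longrightarrow> t2 (U, \<lambda>x. c * f x) = c * t2 (U, f)"
    proof (intro allI impI)
      fix U f c
      assume a: "germ_rep X2 F2 (\<psi> p) (U, f) \<and> c \<in> K"
      then have a1: "germ_rep X2 F2 (\<psi> p) (U, f)" and c: "c \<in> K" by simp_all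
      have Usub: "U \<subseteq> topspace (T n2)"
        using a1 openin_subset[of X2 U] top2 M2k tf_top[OF K fam] unfolding germ_rep_def by auto
      have cF: "(\<lambda>_. c) \<in> induced_sheaf (T n2) (S n2) M2 U" by (rule ind_const[OF sh2 c Usub])
      have fF: "f \<in> induced_sheaf (T n2) (S n2) M2 U" using a1 unfolding germ_rep_def F2_def by simp
      have "(\<lambda>x. c * f x) \<in> F2 (U \<inter> U)"
        using ind_mult[OF sh2 cF fF] unfolding F2_def by simp
      then have gc: "germ_rep X2 F2 (\<psi> p) (U, \<lambda>x. c * f x)" using a1 unfolding germ_rep_def by simp
      have e: "(\<lambda>x. c * f x) \<circ> \<psi> = (\<lambda>x. c * (f \<circ> \<psi>) x)" by (simp add: o_def)
      show "t2 (U, \<lambda>x. c * f x) = c * t2 (U, f)"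
        using t2_eq[OF gc] t2_eq[OF a1] der_parts(5)[OF der1 gr[OF a1] c] unfolding e by simp
    qed
  qed
  then show "derivation K ?X2 ?F2 (\<psi> p) ?t2" unfolding X2_def F2_def t2_def .
  fix \<phi> assume phi: "\<phi> \<in> kdual K n2"
  have g: "germ_rep X2 F2 (\<psi> p) (M2, \<phi>)"
    unfolding germ_rep_def X2_def F2_def
    using openin_sub_self[of M2 "T n2"] M2k tf_top[OF K fam] psiM[OF pM]
      ind_of_sheaf[OF sh2 open_kvec[OF K fam] dual_in_S[OF K fam phi] M2k] by simp
  have "{x \<in> M1. \<psi> x \<in> M2} = M1" using psiM by blast
  then show "(if germ_rep (subtopology (T n2) M2) (induced_sheaf (T n2) (S n2) M2) (\<psi> p) (M2, \<phi>)
            then t ({x \<in> M1. \<psi> x \<in> M2}, \<phi> \<circ> \<psi>) else 0) = t (M1, \<phi> \<circ> \<psi>)" using g unfolding X2_def F2_def by simp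
qed

end



context
  fixes K :: "complex set" and T :: "nat \<Rightarrow> pt topology" and S :: "nat \<Rightarrow> sheaf"
  assumes K: "K = \<real> \<or> K = UNIV" and fam: "taylor_family K T S"
begin

lemma tangent_elim:
  assumes "z \<in> tangent_set K T S n M"
  shows "\<exists>p v t. z = join n p v \<and> p \<in> M \<and> v \<in> kvec K n \<and>
      derivation K (subtopology (T n) M) (induced_sheaf (T n) (S n) M) p t \<and>
      (\<forall>\<phi>\<in>kdual K n. \<phi> v = t (M, \<phi>))"
  using assms unfolding tangent_set_def by blast

lemma tangent_intro:
  assumes "p \<in> M" "v \<in> kvec K n"
     "derivation K (subtopology (T n) M) (induced_sheaf (T n) (S n) M) p t"
     "\<forall>\<phi>\<in>kdual K n. \<phi> v = t (M, \<phi>)"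
  shows "join n p v \<in> tangent_set K T S n M"
  using assms unfolding tangent_set_def by blast

lemma tangent_kvec: "M \<subseteq> kvec K n \<Longrightarrow> tangent_set K T S n M \<subseteq> kvec K (2 * n)"
  using join_kvec[OF K] unfolding tangent_set_def by blast

end



context
  fixes K :: "complex set" and T :: "nat \<Rightarrow> pt topology" and S :: "nat \<Rightarrow> sheaf"
  assumes K: "K = \<real> \<or> K = UNIV" and fam: "taylor_family K T S"
begin

lemma local_diff:
  assumes M1k: "M1 \<subseteq> kvec K n1" and M2k: "M2 \<subseteq> kvec K n2"
    and psi: "smooth_map (subtopology (T n1) M1) (induced_sheaf (T n1) (S n1) M1)
                         (subtopology (T n2) M2) (induced_sheaf (T n2) (S n2) M2) \<psi>"
    and z0: "z0 \<in> tangent_set K T S n1 M1"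
  shows "\<exists>Ob \<Phi>. openin (T (2 * n1)) Ob \<and> z0 \<in> Ob \<and>
     smooth_map (subtopology (T (2 * n1)) Ob) (induced_sheaf (T (2 * n1)) (S (2 * n1)) Ob)
        (T (2 * n2)) (S (2 * n2)) \<Phi> \<and>
     (\<forall>z\<in>tangent_set K T S n1 M1 \<inter> Ob. differential K T S n1 M1 n2 \<psi> z = \<Phi> z \<and>
          \<Phi> z \<in> tangent_set K T S n2 M2)"
proof -
  note KK = Kf[OF K]
  note sh1 = tf_sh[OF K fam, of n1] and sh2 = tf_sh[OF K fam, of n2]
  note sh21 = tf_sh[OF K fam, of "2 * n1"]
  define X1 where "X1 = subtopology (T n1) M1"
  define F1 where "F1 = induced_sheaf (T n1) (S n1) M1"
  define X2 where "X2 = subtopology (T n2) M2"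
  define F2 where "F2 = induced_sheaf (T n2) (S n2) M2"
  have top1: "topspace X1 = M1" unfolding X1_def using M1k tf_top[OF K fam] by auto
  have top2: "topspace X2 = M2" unfolding X2_def using M2k tf_top[OF K fam] by auto
  have psi': "smooth_map X1 F1 X2 F2 \<psi>" using psi unfolding X1_def F1_def X2_def F2_def .
  have cont: "continuous_map X1 X2 \<psi>" using smooth_cont[OF psi'] .
  have psiM: "\<psi> x \<in> M2" if "x \<in> M1" for x
    using continuous_map_image_subset_topspace[OF cont] that top1 top2 by auto
  have M2o: "openin X2 M2" unfolding X2_def using openin_sub_self[of M2 "T n2"] M2k tf_top[OF K fam] by simp
  have dualF2: "\<phi> \<in> F2 M2" if "\<phi> \<in> kdual K n2" for \<phi>
    unfolding F2_def using ind_of_sheaf[OF sh2 open_kvec[OF K fam] dual_in_S[OF K fam that] M2k] .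
  have pullM1: "\<phi> \<circ> \<psi> \<in> F1 M1" if "\<phi> \<in> kdual K n2" for \<phi>
  proof -
    have "{x \<in> topspace X1. \<psi> x \<in> M2} = M1" using top1 psiM by blast
    then show ?thesis using smooth_pull[OF psi' M2o dualF2[OF that]] by simp
  qed
  from tangent_elim[OF K fam z0] have "\<exists>p v t. z0 = join n1 p v \<and> p \<in> M1 \<and> v \<in> kvec K n1 \<and>
      derivation K (subtopology (T n1) M1) (induced_sheaf (T n1) (S n1) M1) p t \<and>
      (\<forall>\<phi>\<in>kdual K n1. \<phi> v = t (M1, \<phi>))" .
  then obtain p0 v0 t0 where pvt0: "z0 = join n1 p0 v0 \<and> p0 \<in> M1 \<and> v0 \<in> kvec K n1 \<and>
      derivation K (subtopology (T n1) M1) (induced_sheaf (T n1) (S n1) M1) p0 t0 \<and>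
      (\<forall>\<phi>\<in>kdual K n1. \<phi> v0 = t0 (M1, \<phi>))" by (elim exE) assumption
  have p0M: "p0 \<in> M1" and v0k: "v0 \<in> kvec K n1" and z0e: "z0 = join n1 p0 v0" using pvt0 by simp_all
  define P where "P i W g \<longleftrightarrow> openin (T n1) W \<and> p0 \<in> W \<and> g \<in> S n1 W \<and> (\<forall>x\<in>M1 \<inter> W. \<psi> x i = g x)" for i W g
  have coord: "\<exists>W g. P i W g" if "i < n2" for i
  proof -
    have "(\<lambda>y. y i) \<circ> \<psi> \<in> F1 M1" using pullM1[OF coord_kdual[OF K that]] .
    then have "\<exists>W. openin (T n1) W \<and> p0 \<in> W \<and> (\<exists>g\<in>S n1 W. \<forall>x\<in>M1 \<inter> W. ((\<lambda>y. y i) \<circ> \<psi>) x = g x)"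
      using p0M unfolding F1_def induced_sheaf_def by blast
    then show ?thesis unfolding P_def by auto
  qed
  define Wf where "Wf i = (SOME W. \<exists>g. P i W g)" for i
  define gf where "gf i = (SOME g. P i (Wf i) g)" for i
  have Pf: "P i (Wf i) (gf i)" if "i < n2" for i
  proof -
    have "\<exists>g. P i (Wf i) g" unfolding Wf_def using someI_ex[OF coord[OF that]] .
    then show ?thesis unfolding gf_def by (rule someI_ex)
  qed
  define W where "W = (\<Inter>i\<in>{..<n2}. Wf i) \<inter> topspace (T n1)"
  have Wo: "openin (T n1) W" unfolding W_def using Pf unfolding P_def by (intro openin_INT) auto
  have Wk: "W \<subseteq> kvec K n1" unfolding W_def using tf_top[OF K fam] by auto
  have p0W: "p0 \<in> W" unfolding W_def using Pf p0M M1k tf_top[OF K fam] unfolding P_def by auto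
  have gW: "gf i \<in> S n1 W" if "i < n2" for i
    using sh_restrict[OF sh1 _ Wo, of "Wf i" "gf i"] Pf[OF that] that unfolding P_def W_def by auto
  have psig: "\<psi> x i = gf i x" if "i < n2" "x \<in> M1 \<inter> W" for i x
    using Pf[OF that(1)] that unfolding P_def W_def by auto
  define Ob where "Ob = {z \<in> kvec K (2 * n1). fstp n1 z \<in> W}"
  have img: "(\<lambda>(p, v). join n1 p v) ` (W \<times> kvec K n1) = Ob"
  proof
    show "(\<lambda>(p, v). join n1 p v) ` (W \<times> kvec K n1) \<subseteq> Ob"
      unfolding Ob_def using join_kvec[OF K] fst_join[OF K] Wk by auto
    show "Ob \<subseteq> (\<lambda>(p, v). join n1 p v) ` (W \<times> kvec K n1)"
    proof
      fix z assume z: "z \<in> Ob"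
      then have "z = join n1 (fstp n1 z) (sndp n1 z)" "fstp n1 z \<in> W" "sndp n1 z \<in> kvec K n1"
        unfolding Ob_def using join_split[OF K] sndp_kvec[OF K] by auto
      then show "z \<in> (\<lambda>(p, v). join n1 p v) ` (W \<times> kvec K n1)" by (metis (no_types, lifting) SigmaI case_prod_conv image_eqI)
    qed
  qed
  have fs: "smooth_map (subtopology (T (2 * n1)) (kvec K (2 * n1)))
      (induced_sheaf (T (2 * n1)) (S (2 * n1)) (kvec K (2 * n1))) (T n1) (S n1) (fstp n1)"
  proof (rule tf_smooth[OF K fam open_kvec[OF K fam]])
    show "fstp n1 ` kvec K (2 * n1) \<subseteq> kvec K n1" using fstp_kvec[OF K] by blast
    fix \<phi> assume "\<phi> \<in> kdual K n1"
    then show "\<phi> \<circ> fstp n1 \<in> S (2 * n1) (kvec K (2 * n1))" using dual_in_S[OF K fam fstp_kdual[OF K]] by blast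
  qed
  have topk: "topspace (subtopology (T (2 * n1)) (kvec K (2 * n1))) = kvec K (2 * n1)"
    using tf_top[OF K fam] by simp
  have Oo: "openin (T (2 * n1)) Ob"
  proof -
    have "openin (subtopology (T (2 * n1)) (kvec K (2 * n1))) Ob"
      using openin_continuous_map_preimage[OF smooth_cont[OF fs] Wo] unfolding Ob_def by (simp add: tf_top[OF K fam])
    then show ?thesis using openin_trans_full open_kvec[OF K fam] by blast
  qed
  have gO: "(\<lambda>z. gf i (fstp n1 z)) \<in> S (2 * n1) Ob" if "i < n2" for i
  proof -
    have "gf i \<circ> fstp n1 \<in> induced_sheaf (T (2 * n1)) (S (2 * n1)) (kvec K (2 * n1)) Ob"
      using smooth_pull[OF fs Wo gW[OF that]] unfolding Ob_def by (simp add: tf_top[OF K fam])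
    then show ?thesis using ind_open[OF sh21 Oo] by (simp add: o_def)
  qed
  define Q where "Q i D \<longleftrightarrow> D \<in> S (2 * n1) Ob \<and> (\<forall>p\<in>W. \<forall>\<phi>\<in>kdual K n1.
              in_msq (T n1) (S n1) p (\<lambda>x. gf i x - gf i p - (\<phi> x - \<phi> p)) \<longrightarrow>
              (\<forall>v\<in>kvec K n1. D (join n1 p v) = \<phi> v))" for i D
  have Dex: "\<exists>D. Q i D" if "i < n2" for i
    using tf_5[OF K fam Wo gW[OF that]] unfolding img Q_def by blast
  define Df where "Df i = (SOME D. Q i D)" for i
  have Qf: "Q i (Df i)" if "i < n2" for i unfolding Df_def using someI_ex[OF Dex[OF that]] .
  have DO: "Df i \<in> S (2 * n1) Ob" if "i < n2" for i using Qf[OF that] unfolding Q_def by simp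
  define w0 where "w0 p v = (\<lambda>i. if i < n2 then Df i (join n1 p v) else 0)" for p v
  define \<Phi> where "\<Phi> z = join n2 (\<lambda>i. if i < n2 then gf i (fstp n1 z) else 0) (\<lambda>i. if i < n2 then Df i z else 0)" for z
  have Dval: "Df i z \<in> K" if "i < n2" "z \<in> Ob" for i z using sh_vals[OF sh21 Oo DO[OF that(1)] that(2)] .
  have gval: "gf i (fstp n1 z) \<in> K" if "i < n2" "z \<in> Ob" for i z
    using sh_vals[OF sh1 Wo gW[OF that(1)]] that(2) unfolding Ob_def by simp
  have Phik: "\<Phi> z \<in> kvec K (2 * n2)" if "z \<in> Ob" for z
    unfolding \<Phi>_def by (rule join_kvec[OF K]) (use gval Dval that KK in \<open>auto simp: kvec_def\<close>)
  have comp: "(\<lambda>z. \<Phi> z k) \<in> S (2 * n1) Ob" if "k < 2 * n2" for k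
  proof (cases "k < n2")
    case True
    have "(\<lambda>z. \<Phi> z k) = (\<lambda>z. gf k (fstp n1 z))" using True unfolding \<Phi>_def join_def by simp
    then show ?thesis using gO[OF True] by simp
  next
    case False
    then have k: "k - n2 < n2" using that by simp
    have "(\<lambda>z. \<Phi> z k) = Df (k - n2)" using False k unfolding \<Phi>_def join_def by auto
    then show ?thesis using DO[OF k] by simp
  qed
  have smooth: "smooth_map (subtopology (T (2 * n1)) Ob) (induced_sheaf (T (2 * n1)) (S (2 * n1)) Ob)
        (T (2 * n2)) (S (2 * n2)) \<Phi>"
  proof (rule tf_smooth[OF K fam Oo])
    show "\<Phi> ` Ob \<subseteq> kvec K (2 * n2)" using Phik by blast
    fix \<phi> assume phi: "\<phi> \<in> kdual K (2 * n2)"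
    have cK: "\<phi> (evec k) \<in> K" if "k < 2 * n2" for k
      using phi evec_kvec[OF K that] unfolding kdual_def by blast
    have "(\<lambda>z. \<Sum>k<2 * n2. \<Phi> z k * \<phi> (evec k)) \<in> S (2 * n1) Ob"
      by (rule sh_sum[OF sh21 KK(1) Oo]) (rule sh_mult[OF sh21 Oo comp sh_const[OF sh21 Oo cK]]; simp)
    then show "\<phi> \<circ> \<Phi> \<in> S (2 * n1) Ob"
      by (rule sh_agree[OF sh21 Oo]) (simp add: lin_rep[OF K phi Phik])
  qed
  have C: "t (M1, \<phi> \<circ> \<psi>) = \<phi> (w0 p v)"
    if pM: "p \<in> M1" and pW: "p \<in> W" and v: "v \<in> kvec K n1"
       and der: "derivation K (subtopology (T n1) M1) (induced_sheaf (T n1) (S n1) M1) p t"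
       and tv: "\<forall>\<phi>\<in>kdual K n1. \<phi> v = t (M1, \<phi>)"
       and phi: "\<phi> \<in> kdual K n2" for p v t \<phi>
  proof -
    note der1 = der[folded X1_def F1_def]
    define U where "U = M1 \<inter> W"
    have Uo: "openin X1 U" unfolding X1_def U_def using openin_subtopology_Int2[OF Wo] .
    have pU: "p \<in> U" using pM pW unfolding U_def by simp
    have UW: "U \<subseteq> W" unfolding U_def by simp
    have Usub: "U \<subseteq> topspace (T n1)" using UW Wk tf_top[OF K fam] by auto
    have gU: "gf i \<in> F1 U" if "i < n2" for i unfolding F1_def by (rule ind_of_sheaf[OF sh1 Wo gW[OF that] UW])
    have tD: "t (U, gf i) = Df i (join n1 p v)" if i: "i < n2" for i
    proof -
      define h where "h = (\<lambda>x. gf i x - gf i p)"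
      have gp: "gf i p \<in> K" using sh_vals[OF sh1 Wo gW[OF i] pW] .
      have hW: "h \<in> S n1 W" unfolding h_def by (rule sh_diff[OF sh1 KK(3) Wo gW[OF i] sh_const[OF sh1 Wo gp]])
      have h0: "h p = 0" unfolding h_def by simp
      have "\<exists>\<phi>'\<in>kdual K n1. in_msq (T n1) (S n1) p (\<lambda>x. h x - (\<phi>' x - \<phi>' p))"
        by (rule tf_4[OF K fam pW Wo hW h0])
      then have "\<exists>\<phi>'. \<phi>' \<in> kdual K n1 \<and> in_msq (T n1) (S n1) p (\<lambda>x. h x - (\<phi>' x - \<phi>' p))"
        by (simp only: Bex_def)
      then obtain \<phi>' where ph: "\<phi>' \<in> kdual K n1 \<and> in_msq (T n1) (S n1) p (\<lambda>x. h x - (\<phi>' x - \<phi>' p))"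
        by (elim exE) assumption
      have ph1: "\<phi>' \<in> kdual K n1" using ph by simp
      have msq: "in_msq (T n1) (S n1) p (\<lambda>x. gf i x - gf i p - (\<phi>' x - \<phi>' p))"
        using ph unfolding h_def by simp
      have "t (M1 \<inter> W, gf i) = t (M1, \<phi>')"
        by (rule der_linear[OF K fam M1k der pM Wo pW gW[OF i] ph1 msq])
      also have "\<dots> = \<phi>' v" using tv ph1 by simp
      also have "\<dots> = Df i (join n1 p v)" using Qf[OF i] pW ph1 msq v unfolding Q_def by simp
      finally show ?thesis unfolding U_def .
    qed
    define c where "c i = \<phi> (evec i)" for i
    have cK: "c i \<in> K" if "i < n2" for i
      using phi evec_kvec[OF K that] unfolding kdual_def c_def by blast
    have termU: "(\<lambda>x. c i * gf i x) \<in> F1 U" if "i < n2" for i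
      unfolding F1_def by (rule ind_of_sheaf[OF sh1 Wo sh_cmul[OF sh1 Wo cK[OF that] gW[OF that]] UW])
    have addU: "\<And>f g. f \<in> F1 U \<Longrightarrow> g \<in> F1 U \<Longrightarrow> (\<lambda>x. f x + g x) \<in> F1 U"
    proof -
      fix f g assume "f \<in> F1 U" "g \<in> F1 U"
      then show "(\<lambda>x. f x + g x) \<in> F1 U" using ind_add[OF sh1, of f M1 U g U] unfolding F1_def by simp
    qed
    have oneU: "(\<lambda>_. 1) \<in> F1 U" unfolding F1_def by (rule ind_const[OF sh1 KK(2) Usub])
    have zeroU: "(\<lambda>_. 0) \<in> F1 U" unfolding F1_def by (rule ind_const[OF sh1 KK(1) Usub])
    have s: "(\<lambda>x. \<Sum>i<n2. c i * gf i x) \<in> F1 U \<and>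
      t (U, \<lambda>x. \<Sum>i<n2. c i * gf i x) = (\<Sum>i<n2. t (U, \<lambda>x. c i * gf i x))"
    proof (rule der_sum[OF der1])
      show "\<And>f g. f \<in> F1 U \<Longrightarrow> g \<in> F1 U \<Longrightarrow> (\<lambda>x. f x + g x) \<in> F1 U" by (rule addU)
      show "(\<lambda>_. 1) \<in> F1 U" by (rule oneU)
      show "(\<lambda>_. 0) \<in> F1 U" by (rule zeroU)
      show "0 \<in> K" by (rule KK(1))
      show "openin X1 U" by (rule Uo)
      show "p \<in> U" by (rule pU)
      show "\<And>j. j < n2 \<Longrightarrow> (\<lambda>x. c j * gf j x) \<in> F1 U" by (rule termU)
    qed
    have each: "t (U, \<lambda>x. c i * gf i x) = c i * Df i (join n1 p v)" if i: "i < n2" for i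
    proof -
      have "germ_rep X1 F1 p (U, gf i)" unfolding germ_rep_def using Uo pU gU[OF i] by simp
      from der_parts(5)[OF der1 this cK[OF i]] show ?thesis using tD[OF i] by simp
    qed
    have "t (M1, \<phi> \<circ> \<psi>) = t (U, \<lambda>x. \<Sum>i<n2. c i * gf i x)"
    proof (rule der_parts(2)[OF der1])
      show "germ_rep X1 F1 p (M1, \<phi> \<circ> \<psi>)" unfolding germ_rep_def
        using pullM1[OF phi] pM openin_topspace[of X1] top1 by simp
      show "germ_rep X1 F1 p (U, \<lambda>x. \<Sum>i<n2. c i * gf i x)" unfolding germ_rep_def
        using s Uo pU by simp
      have "(\<phi> \<circ> \<psi>) x = (\<Sum>i<n2. c i * gf i x)" if x: "x \<in> U" for x
      proof -
        have xM: "x \<in> M1" using x unfolding U_def by simp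
        have "(\<phi> \<circ> \<psi>) x = (\<Sum>i<n2. \<psi> x i * \<phi> (evec i))"
          using lin_rep[OF K phi] psiM[OF xM] M2k by auto
        also have "\<dots> = (\<Sum>i<n2. c i * gf i x)"
          by (rule sum.cong) (use psig x in \<open>auto simp: U_def c_def mult.commute\<close>)
        finally show ?thesis .
      qed
      then show "\<exists>Wa. openin X1 Wa \<and> p \<in> Wa \<and> Wa \<subseteq> M1 \<inter> U \<and> (\<forall>x\<in>Wa. (\<phi> \<circ> \<psi>) x = (\<Sum>i<n2. c i * gf i x))"
        using Uo pU unfolding U_def by (intro exI[of _ "M1 \<inter> W"]) auto
    qed
    also have "\<dots> = (\<Sum>i<n2. c i * Df i (join n1 p v))" using s each by simp
    also have "\<dots> = \<phi> (w0 p v)"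
    proof -
      have jO: "join n1 p v \<in> Ob" unfolding Ob_def using join_kvec[OF K] fst_join[OF K] pW Wk v by auto
      have wk: "w0 p v \<in> kvec K n2" unfolding w0_def kvec_def using Dval[OF _ jO] by auto
      show ?thesis using lin_rep[OF K phi wk] unfolding w0_def c_def by (simp add: mult.commute)
    qed
    finally show ?thesis .
  qed
  show ?thesis
  proof (intro exI conjI)
    show "openin (T (2 * n1)) Ob" by (rule Oo)
    show "z0 \<in> Ob" unfolding Ob_def z0e using join_kvec[OF K] fst_join[OF K] p0M M1k v0k p0W by auto
    show "smooth_map (subtopology (T (2 * n1)) Ob) (induced_sheaf (T (2 * n1)) (S (2 * n1)) Ob)
        (T (2 * n2)) (S (2 * n2)) \<Phi>" by (rule smooth)
    show "\<forall>z\<in>tangent_set K T S n1 M1 \<inter> Ob. differential K T S n1 M1 n2 \<psi> z = \<Phi> z \<and>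
          \<Phi> z \<in> tangent_set K T S n2 M2"
    proof
      fix z assume z: "z \<in> tangent_set K T S n1 M1 \<inter> Ob"
      from tangent_elim[OF K fam] z have "\<exists>p v t. z = join n1 p v \<and> p \<in> M1 \<and> v \<in> kvec K n1 \<and>
        derivation K (subtopology (T n1) M1) (induced_sheaf (T n1) (S n1) M1) p t \<and>
        (\<forall>\<phi>\<in>kdual K n1. \<phi> v = t (M1, \<phi>))" by blast
      then obtain p v t where pvt: "z = join n1 p v \<and> p \<in> M1 \<and> v \<in> kvec K n1 \<and>
        derivation K (subtopology (T n1) M1) (induced_sheaf (T n1) (S n1) M1) p t \<and>
        (\<forall>\<phi>\<in>kdual K n1. \<phi> v = t (M1, \<phi>))" by (elim exE) assumption
      have ze: "z = join n1 p v" and pM: "p \<in> M1" and v: "v \<in> kvec K n1"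
        and der: "derivation K (subtopology (T n1) M1) (induced_sheaf (T n1) (S n1) M1) p t"
        and tv: "\<forall>\<phi>\<in>kdual K n1. \<phi> v = t (M1, \<phi>)" using pvt by simp_all
      have pk: "p \<in> kvec K n1" using pM M1k by auto
      have fz: "fstp n1 z = p" unfolding ze by (rule fst_join[OF K pk])
      have sz: "sndp n1 z = v" unfolding ze by (rule snd_join[OF K v])
      have pW: "p \<in> W" using z fz unfolding Ob_def by auto
      have jO: "join n1 p v \<in> Ob" using z ze by simp
      have wk: "w0 p v \<in> kvec K n2" unfolding w0_def kvec_def using Dval[OF _ jO] by auto
      have theq: "(THE w. w \<in> kvec K n2 \<and>
        (\<exists>t. derivation K (subtopology (T n1) M1) (induced_sheaf (T n1) (S n1) M1) p t \<and>
             (\<forall>\<phi>\<in>kdual K n1. \<phi> v = t (M1, \<phi>)) \<and>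
             (\<forall>\<phi>\<in>kdual K n2. \<phi> w = t (M1, \<phi> \<circ> \<psi>)))) = w0 p v"
      proof (rule the_equality)
        show "w0 p v \<in> kvec K n2 \<and>
          (\<exists>t. derivation K (subtopology (T n1) M1) (induced_sheaf (T n1) (S n1) M1) p t \<and>
             (\<forall>\<phi>\<in>kdual K n1. \<phi> v = t (M1, \<phi>)) \<and>
             (\<forall>\<phi>\<in>kdual K n2. \<phi> (w0 p v) = t (M1, \<phi> \<circ> \<psi>)))"
          using wk der tv C[OF pM pW v der tv] by auto
        fix w assume w: "w \<in> kvec K n2 \<and>
          (\<exists>t. derivation K (subtopology (T n1) M1) (induced_sheaf (T n1) (S n1) M1) p t \<and>
             (\<forall>\<phi>\<in>kdual K n1. \<phi> v = t (M1, \<phi>)) \<and>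
             (\<forall>\<phi>\<in>kdual K n2. \<phi> w = t (M1, \<phi> \<circ> \<psi>)))"
        then have "\<exists>t. derivation K (subtopology (T n1) M1) (induced_sheaf (T n1) (S n1) M1) p t \<and>
             (\<forall>\<phi>\<in>kdual K n1. \<phi> v = t (M1, \<phi>)) \<and>
             (\<forall>\<phi>\<in>kdual K n2. \<phi> w = t (M1, \<phi> \<circ> \<psi>))" by (rule conjunct2)
        then obtain t' where t': "derivation K (subtopology (T n1) M1) (induced_sheaf (T n1) (S n1) M1) p t' \<and>
             (\<forall>\<phi>\<in>kdual K n1. \<phi> v = t' (M1, \<phi>)) \<and>
             (\<forall>\<phi>\<in>kdual K n2. \<phi> w = t' (M1, \<phi> \<circ> \<psi>))" by (elim exE) assumption
        show "w = w0 p v"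
        proof (rule kvec_ext[OF K])
          show "w \<in> kvec K n2" using w by simp
          show "w0 p v \<in> kvec K n2" by (rule wk)
          fix \<phi> assume phi: "\<phi> \<in> kdual K n2"
          have d': "derivation K (subtopology (T n1) M1) (induced_sheaf (T n1) (S n1) M1) p t'"
            and tv': "\<forall>\<phi>\<in>kdual K n1. \<phi> v = t' (M1, \<phi>)" using t' by simp_all
          show "\<phi> w = \<phi> (w0 p v)" using t' phi C[OF pM pW v d' tv' phi] by simp
        qed
      qed
      have psip: "\<psi> p = (\<lambda>i. if i < n2 then gf i p else 0)"
      proof
        fix i show "\<psi> p i = (if i < n2 then gf i p else 0)"
          using psig[of i p] pM pW psiM[OF pM] M2k unfolding kvec_def by auto
      qed
      have dz: "differential K T S n1 M1 n2 \<psi> z = join n2 (\<psi> p) (w0 p v)"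
        unfolding differential_def Let_def fz sz theq ..
      have Pz: "\<Phi> z = join n2 (\<psi> p) (w0 p v)"
        unfolding \<Phi>_def psip w0_def fz unfolding ze ..
      have "join n2 (\<psi> p) (w0 p v) \<in> tangent_set K T S n2 M2"
      proof (rule tangent_intro[OF K fam psiM[OF pM] wk pushforward(1)[OF K fam M1k M2k psi der pM]])
        show "\<forall>\<phi>\<in>kdual K n2. \<phi> (w0 p v) =
          (if germ_rep (subtopology (T n2) M2) (induced_sheaf (T n2) (S n2) M2) (\<psi> p) (M2, \<phi>)
           then t ({x \<in> M1. \<psi> x \<in> fst (M2, \<phi>)}, snd (M2, \<phi>) \<circ> \<psi>) else 0)"
        proof
          fix \<phi> assume phi: "\<phi> \<in> kdual K n2"
          have "(if germ_rep (subtopology (T n2) M2) (induced_sheaf (T n2) (S n2) M2) (\<psi> p) (M2, \<phi>)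
            then t ({x \<in> M1. \<psi> x \<in> M2}, \<phi> \<circ> \<psi>) else 0) = \<phi> (w0 p v)"
            by (rule trans[OF pushforward(2)[OF K fam M1k M2k psi der pM phi] C[OF pM pW v der tv phi]])
          then show "\<phi> (w0 p v) =
          (if germ_rep (subtopology (T n2) M2) (induced_sheaf (T n2) (S n2) M2) (\<psi> p) (M2, \<phi>)
           then t ({x \<in> M1. \<psi> x \<in> fst (M2, \<phi>)}, snd (M2, \<phi>) \<circ> \<psi>) else 0)"
            unfolding fst_conv snd_conv by (rule sym)
        qed
      qed
      then show "differential K T S n1 M1 n2 \<psi> z = \<Phi> z \<and> \<Phi> z \<in> tangent_set K T S n2 M2"
        using dz Pz by simp
    qed
  qed
qed

end



theorem lemma3p6p15:
  fixes K :: "complex set" and T :: "nat \<Rightarrow> pt topology" and S :: "nat \<Rightarrow> sheaf"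
    and n1 n2 :: nat and U1 U2 M1 M2 :: "pt set" and \<psi> :: "pt \<Rightarrow> pt"
  assumes K: "K = \<real> \<or> K = UNIV"
    and fam: "taylor_family K T S"
    and U1: "openin (T n1) U1" and M1: "M1 \<subseteq> U1" "closedin (subtopology (T n1) U1) M1"
    and U2: "openin (T n2) U2" and M2: "M2 \<subseteq> U2" "closedin (subtopology (T n2) U2) M2"
    and psi: "smooth_map (subtopology (T n1) M1) (induced_sheaf (T n1) (S n1) M1)
                         (subtopology (T n2) M2) (induced_sheaf (T n2) (S n2) M2) \<psi>"
  shows "smooth_map
           (subtopology (T (2 * n1)) (tangent_set K T S n1 M1))
           (induced_sheaf (T (2 * n1)) (S (2 * n1)) (tangent_set K T S n1 M1))
           (subtopology (T (2 * n2)) (tangent_set K T S n2 M2))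
           (induced_sheaf (T (2 * n2)) (S (2 * n2)) (tangent_set K T S n2 M2))
           (differential K T S n1 M1 n2 \<psi>)"
proof -
  have M1k: "M1 \<subseteq> kvec K n1" using M1(1) openin_subset[OF U1] tf_top[OF K fam] by auto
  have M2k: "M2 \<subseteq> kvec K n2" using M2(1) openin_subset[OF U2] tf_top[OF K fam] by auto
  have TM1k: "tangent_set K T S n1 M1 \<subseteq> kvec K (2 * n1)" by (rule tangent_kvec[OF K fam M1k])
  have TM2k: "tangent_set K T S n2 M2 \<subseteq> kvec K (2 * n2)" by (rule tangent_kvec[OF K fam M2k])
  have top1: "topspace (subtopology (T (2 * n1)) (tangent_set K T S n1 M1)) = tangent_set K T S n1 M1"
    using TM1k tf_top[OF K fam] by auto
  have top2: "topspace (subtopology (T (2 * n2)) (tangent_set K T S n2 M2)) = tangent_set K T S n2 M2"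
    using TM2k tf_top[OF K fam] by auto
  note loc = local_diff[OF K fam M1k M2k psi]
  have topOb: "topspace (subtopology (T (2 * n1)) Ob) = Ob" if "openin (T (2 * n1)) Ob" for Ob
    using openin_subset[OF that] by auto
  have maps: "differential K T S n1 M1 n2 \<psi> z \<in> tangent_set K T S n2 M2"
    if z: "z \<in> tangent_set K T S n1 M1" for z
  proof -
    from loc[OF z] obtain Ob \<Phi> where L: "openin (T (2 * n1)) Ob \<and> z \<in> Ob \<and>
     smooth_map (subtopology (T (2 * n1)) Ob) (induced_sheaf (T (2 * n1)) (S (2 * n1)) Ob)
        (T (2 * n2)) (S (2 * n2)) \<Phi> \<and>
     (\<forall>z\<in>tangent_set K T S n1 M1 \<inter> Ob. differential K T S n1 M1 n2 \<psi> z = \<Phi> z \<and>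
          \<Phi> z \<in> tangent_set K T S n2 M2)" by (elim exE) assumption
    then show ?thesis using z by auto
  qed
  show ?thesis unfolding smooth_map_def
  proof (intro conjI allI impI ballI)
    show "continuous_map (subtopology (T (2 * n1)) (tangent_set K T S n1 M1))
       (subtopology (T (2 * n2)) (tangent_set K T S n2 M2)) (differential K T S n1 M1 n2 \<psi>)"
      unfolding continuous_map_def
    proof (intro conjI allI impI)
      show "differential K T S n1 M1 n2 \<psi> \<in> topspace (subtopology (T (2 * n1)) (tangent_set K T S n1 M1))
          \<rightarrow> topspace (subtopology (T (2 * n2)) (tangent_set K T S n2 M2))"
        unfolding top1 top2 using maps by blast
      fix G assume G: "openin (subtopology (T (2 * n2)) (tangent_set K T S n2 M2)) G"
      have "\<exists>O'. openin (T (2 * n2)) O' \<and> G = O' \<inter> tangent_set K T S n2 M2"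
        using G openin_subtopology by blast
      then obtain O' where O': "openin (T (2 * n2)) O' \<and> G = O' \<inter> tangent_set K T S n2 M2"
        by (elim exE) assumption
      show "openin (subtopology (T (2 * n1)) (tangent_set K T S n1 M1))
         {x \<in> topspace (subtopology (T (2 * n1)) (tangent_set K T S n1 M1)).
          differential K T S n1 M1 n2 \<psi> x \<in> G}"
        unfolding top1
      proof (subst openin_subopen, intro ballI)
        fix z0 assume z0: "z0 \<in> {x \<in> tangent_set K T S n1 M1. differential K T S n1 M1 n2 \<psi> x \<in> G}"
        have z0T: "z0 \<in> tangent_set K T S n1 M1" using z0 by simp
        from loc[OF z0T] obtain Ob \<Phi> where L: "openin (T (2 * n1)) Ob \<and> z0 \<in> Ob \<and>
         smooth_map (subtopology (T (2 * n1)) Ob) (induced_sheaf (T (2 * n1)) (S (2 * n1)) Ob)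
            (T (2 * n2)) (S (2 * n2)) \<Phi> \<and>
         (\<forall>z\<in>tangent_set K T S n1 M1 \<inter> Ob. differential K T S n1 M1 n2 \<psi> z = \<Phi> z \<and>
              \<Phi> z \<in> tangent_set K T S n2 M2)" by (elim exE) assumption
        have Obo: "openin (T (2 * n1)) Ob" using L by simp
        have sm: "smooth_map (subtopology (T (2 * n1)) Ob) (induced_sheaf (T (2 * n1)) (S (2 * n1)) Ob)
            (T (2 * n2)) (S (2 * n2)) \<Phi>" using L by simp
        define Pre where "Pre = {z \<in> Ob. \<Phi> z \<in> O'}"
        have "openin (subtopology (T (2 * n1)) Ob) Pre"
          using openin_continuous_map_preimage[OF smooth_cont[OF sm] conjunct1[OF O'], unfolded topOb[OF Obo]]
          unfolding Pre_def .
        then have Preo: "openin (T (2 * n1)) Pre" using openin_trans_full Obo by blast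
        show "\<exists>T'. openin (subtopology (T (2 * n1)) (tangent_set K T S n1 M1)) T' \<and> z0 \<in> T' \<and>
           T' \<subseteq> {x \<in> tangent_set K T S n1 M1. differential K T S n1 M1 n2 \<psi> x \<in> G}"
        proof (intro exI conjI)
          show "openin (subtopology (T (2 * n1)) (tangent_set K T S n1 M1)) (Pre \<inter> tangent_set K T S n1 M1)"
            by (rule openin_subtopology_Int[OF Preo])
          show "z0 \<in> Pre \<inter> tangent_set K T S n1 M1" using z0 L O' unfolding Pre_def by auto
          show "Pre \<inter> tangent_set K T S n1 M1 \<subseteq> {x \<in> tangent_set K T S n1 M1. differential K T S n1 M1 n2 \<psi> x \<in> G}"
            using L O' unfolding Pre_def by auto
        qed
      qed
    qed
    fix U f
    assume U: "openin (subtopology (T (2 * n2)) (tangent_set K T S n2 M2)) U"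
      and f: "f \<in> induced_sheaf (T (2 * n2)) (S (2 * n2)) (tangent_set K T S n2 M2) U"
    show "f \<circ> differential K T S n1 M1 n2 \<psi> \<in> induced_sheaf (T (2 * n1)) (S (2 * n1)) (tangent_set K T S n1 M1)
          {x \<in> topspace (subtopology (T (2 * n1)) (tangent_set K T S n1 M1)). differential K T S n1 M1 n2 \<psi> x \<in> U}"
      unfolding top1 induced_sheaf_def
    proof (intro CollectI ballI)
      fix z0 assume z0: "z0 \<in> {x \<in> tangent_set K T S n1 M1. differential K T S n1 M1 n2 \<psi> x \<in> U}"
      have "\<exists>W. openin (T (2 * n2)) W \<and> differential K T S n1 M1 n2 \<psi> z0 \<in> W \<and>
          (\<exists>g\<in>S (2 * n2) W. \<forall>x\<in>U \<inter> W. f x = g x)"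
        using f z0 unfolding induced_sheaf_def by blast
      then obtain W where Wg: "openin (T (2 * n2)) W \<and> differential K T S n1 M1 n2 \<psi> z0 \<in> W \<and>
          (\<exists>g\<in>S (2 * n2) W. \<forall>x\<in>U \<inter> W. f x = g x)" by (elim exE) assumption
      then have "\<exists>g. g \<in> S (2 * n2) W \<and> (\<forall>x\<in>U \<inter> W. f x = g x)" by (simp add: Bex_def)
      then obtain g where g: "g \<in> S (2 * n2) W \<and> (\<forall>x\<in>U \<inter> W. f x = g x)" by (elim exE) assumption
      have Wo: "openin (T (2 * n2)) W" using Wg by simp
      have z0T: "z0 \<in> tangent_set K T S n1 M1" using z0 by simp
      from loc[OF z0T] obtain Ob \<Phi> where L: "openin (T (2 * n1)) Ob \<and> z0 \<in> Ob \<and>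
         smooth_map (subtopology (T (2 * n1)) Ob) (induced_sheaf (T (2 * n1)) (S (2 * n1)) Ob)
            (T (2 * n2)) (S (2 * n2)) \<Phi> \<and>
         (\<forall>z\<in>tangent_set K T S n1 M1 \<inter> Ob. differential K T S n1 M1 n2 \<psi> z = \<Phi> z \<and>
              \<Phi> z \<in> tangent_set K T S n2 M2)" by (elim exE) assumption
      have Obo: "openin (T (2 * n1)) Ob" using L by simp
      have sm: "smooth_map (subtopology (T (2 * n1)) Ob) (induced_sheaf (T (2 * n1)) (S (2 * n1)) Ob)
            (T (2 * n2)) (S (2 * n2)) \<Phi>" using L by simp
      define W' where "W' = {z \<in> Ob. \<Phi> z \<in> W}"
      have "openin (subtopology (T (2 * n1)) Ob) W'"
        using openin_continuous_map_preimage[OF smooth_cont[OF sm] Wo, unfolded topOb[OF Obo]]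
        unfolding W'_def .
      then have W'o: "openin (T (2 * n1)) W'" using openin_trans_full Obo by blast
      have "g \<circ> \<Phi> \<in> induced_sheaf (T (2 * n1)) (S (2 * n1)) Ob W'"
        using smooth_pull[OF sm Wo conjunct1[OF g], unfolded topOb[OF Obo]] unfolding W'_def .
      then have gP: "g \<circ> \<Phi> \<in> S (2 * n1) W'" using ind_open[OF tf_sh[OF K fam] W'o] by blast
      show "\<exists>W. openin (T (2 * n1)) W \<and> z0 \<in> W \<and>
          (\<exists>h\<in>S (2 * n1) W. \<forall>x\<in>{x \<in> tangent_set K T S n1 M1. differential K T S n1 M1 n2 \<psi> x \<in> U} \<inter> W.
             (f \<circ> differential K T S n1 M1 n2 \<psi>) x = h x)"
      proof (intro exI conjI bexI)
        show "openin (T (2 * n1)) W'" by (rule W'o)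
        show "z0 \<in> W'" using z0 L Wg unfolding W'_def by auto
        show "g \<circ> \<Phi> \<in> S (2 * n1) W'" by (rule gP)
        show "\<forall>x\<in>{x \<in> tangent_set K T S n1 M1. differential K T S n1 M1 n2 \<psi> x \<in> U} \<inter> W'.
             (f \<circ> differential K T S n1 M1 n2 \<psi>) x = (g \<circ> \<Phi>) x"
          using L g unfolding W'_def by auto
      qed
    qed
  qed
qed


end
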